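(* Let $\mathbf{H}$ be the gap-insertion Hopf algebra of noncrossing partitions, $e$ the infinitesimal character with $e(P)=1$ if $P$ is a noncrossing partition with one block and $e(P)=0$ for other noncrossing partitions, and define $\psi_\prec,\psi_\succ,\psi_\star\in\mathbf H^*$ as the unique solutions of $\psi_\prec=\varepsilon+e\prec\psi_\prec$ and $\psi_\succ=\varepsilon+\psi_\succ\succ e$, and $\psi_\star=\exp_\star(e)=\sum_{m\geq0}e^{\star m}/m!$. Then for every nonempty noncrossing partition $P$: 1. $\psi_\prec(P)=1$; 2. $\psi_\succ(P)=1$ if $P$ is boolean and $\psi_\succ(P)=0$ otherwise; 3. if $P$ has $k$ blocks, $\psi_\star(P)=\operatorname{ho}(P)/k!$.
   Context: Noncrossing partitions of $[n]$: no $a<c<b<d$ with $a,b$ in one block and $c,d$ in another; partitions of finite linearly ordered sets identified with partitions of $[n]$ via the order-preserving bijection; $P_{|X}$ induced partition. $\operatorname{Conv}(X)=\{\min X,\dots,\max X\}$; on blocks $\pi\to\rho$ iff $\operatorname{Conv}(\pi)\cap\rho\neq\emptyset$ (transitively closed; for noncrossing $P$ and $\pi\ne\rho$ this means $\rho$ is nested inside $\pi$). Upperset $U$: ($\pi\in U,\pi\to\rho$)$\Rightarrow\rho\in U$; lowerset $L$: ($\pi\in L,\sigma\to\pi$)$\Rightarrow\sigma\in L$. Cut $(L,U)$: lowerset $L$ and complement $U$; $L$ identified with the restriction of $P$ to the union of its blocks, elements $x_1<\dots<x_k$; $D_0=\{y<x_1\}$, $D_i=\{x_i<y<x_{i+1}\}$,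 $D_k=\{y>x_k\}$, $U_i=P_{|D_i}$, $\overline U$ ordered product of nonempty $U_i$. $\mathbf H$: free associative unital algebra on nonempty noncrossing partitions; basis of multipartitions (shift-concatenated); cuts of multipartitions are tuples of cuts, $L=L_1\cdots L_r$, $\overline U=\overline{U_1}\cdots\overline{U_r}$. Coproduct $\Delta(P)=\sum_{\text{cuts}}L\otimes\overline U$, counit $\varepsilon$ ($1$ on $\mathbf 1$, $0$ on nonempty monomials), $f\star g=(f\otimes g)\Delta$. For nonempty $P$: $\Delta_\prec(P)=\sum_{\text{cuts},1\in L}L\otimes\overline U$, $\Delta_\succ(P)=\sum_{\text{cuts},1\in U}L\otimes\overline U$ (according to whether the element $1$ lies in a block of $L$ or of $U$). For $f,g\in\mathbf H^*$, $f\prec g$ and $f\succ g$ vanish on $\mathbf1$ and equal $(f\otimes g)\Delta_\prec$, resp. $(f\otimes g)\Delta_\succ$, on nonempty multipartitions. Infinitesimal characters: linear forms vanishing on $\mathbf1$ and on products of two nonempty monomials. A noncrossing partition is boolean if every block is a set of consecutive integers. A heap ordering of a noncrossing partition $P$ with $k$ blocks is a bijection $\sigma$ from its blocks to $[k]$ such that $\sigma(\pi)<\sigma(\rho)$ whenever $\rho\ne\pi$ is nested inside $\pi$ (i.e. $\sigma$ is monotone for $\to$); $\operatorname{ho}(P)$ is the number of heap orderings. *)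

theory Defs
  imports Complex_Main "HOL-Library.Disjoint_Sets"
begin

(* A set partition is a set of blocks ("nat set set"); a (multi)partition word,
   i.e. a basis monomial of H, is a list of nonempty noncrossing partitions. *)

definition noncrossing :: "nat set set \<Rightarrow> bool" where
  "noncrossing P \<longleftrightarrow> \<not> (\<exists>\<pi>\<in>P. \<exists>\<rho>\<in>P. \<pi> \<noteq> \<rho> \<and>
      (\<exists>a b c d. a < c \<and> c < b \<and> b < d \<and> a \<in> \<pi> \<and> b \<in> \<pi> \<and> c \<in> \<rho> \<and> d \<in> \<rho>))"

definition ncp :: "nat set set \<Rightarrow> bool" where
  "ncp P \<longleftrightarrow> (\<exists>n. partition_on {1..n} P) \<and> noncrossing P"

definition valid_word :: "nat set set list \<Rightarrow> bool" where
  "valid_word w \<longleftrightarrow> (\<forall>P\<in>set w. ncp P \<and> P \<noteq> {})"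

definition Conv :: "nat set \<Rightarrow> nat set" where
  "Conv X = {Min X..Max X}"

(* order-preserving identification of a partition of a finite set of naturals
   with a partition of [n] *)
definition rank :: "nat set \<Rightarrow> nat \<Rightarrow> nat" where
  "rank A x = card {y\<in>A. y < x} + 1"

definition std :: "nat set set \<Rightarrow> nat set set" where
  "std P = (\<lambda>\<pi>. rank (\<Union>P) ` \<pi>) ` P"

definition restr :: "nat set set \<Rightarrow> nat set \<Rightarrow> nat set set" where
  "restr P X = (\<lambda>\<pi>. \<pi> \<inter> X) ` P - {{}}"

definition lowersets :: "nat set set \<Rightarrow> nat set set set" where
  "lowersets P = {L. L \<subseteq> P \<and> (\<forall>\<pi>\<in>L. \<forall>\<sigma>\<in>P. Conv \<sigma> \<inter> \<pi> \<noteq> {} \<longrightarrow> \<sigma> \<in> L)}"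

(* gap D_i: elements of P not in the lowerset L lying between x_i and x_{i+1}
   (x_1 < ... < x_k the elements of L); D_0 below x_1, D_k above x_k *)
definition gap :: "nat set set \<Rightarrow> nat set set \<Rightarrow> nat \<Rightarrow> nat set" where
  "gap P L i = {y \<in> \<Union>P - \<Union>L. card {x \<in> \<Union>L. x < y} = i}"

(* left factor L of a cut, as a monomial (empty lowerset = unit 1 = empty word) *)
definition lower :: "nat set set \<Rightarrow> nat set set \<Rightarrow> nat set set list" where
  "lower P L = (if L = {} then [] else [std L])"

(* right factor \<overline>U: ordered product of the nonempty U_i = P|D_i *)
definition upper :: "nat set set \<Rightarrow> nat set set \<Rightarrow> nat set set list" where
  "upper P L = filter (\<lambda>Q. Q \<noteq> {})
     (map (\<lambda>i. std (restr P (gap P L i))) [0..<card (\<Union>L) + 1])"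

(* linear forms on H are given by their values on basis words *)
type_synonym form = "nat set set list \<Rightarrow> real"

(* convolution f \<star> g = (f \<otimes> g) \<Delta>, with \<Delta> extended multiplicatively:
   cuts of a multipartition are tuples of cuts *)
definition conv :: "form \<Rightarrow> form \<Rightarrow> form" where
  "conv f g w = (\<Sum>Ls \<in> listset (map lowersets w).
      f (concat (map (\<lambda>(P, L). lower P L) (zip w Ls))) *
      g (concat (map (\<lambda>(P, L). upper P L) (zip w Ls))))"

(* f \<prec> g : cuts where the element 1 (of the shift-concatenated multipartition,
   i.e. of its first partition) lies in a block of L *)
definition dprec :: "form \<Rightarrow> form \<Rightarrow> form" where
  "dprec f g w = (if w = [] then 0 else
     (\<Sum>Ls \<in> {Ls \<in> listset (map lowersets w). (1::nat) \<in> \<Union>(hd Ls)}.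
      f (concat (map (\<lambda>(P, L). lower P L) (zip w Ls))) *
      g (concat (map (\<lambda>(P, L). upper P L) (zip w Ls)))))"

definition dsucc :: "form \<Rightarrow> form \<Rightarrow> form" where
  "dsucc f g w = (if w = [] then 0 else
     (\<Sum>Ls \<in> {Ls \<in> listset (map lowersets w). (1::nat) \<notin> \<Union>(hd Ls)}.
      f (concat (map (\<lambda>(P, L). lower P L) (zip w Ls))) *
      g (concat (map (\<lambda>(P, L). upper P L) (zip w Ls)))))"

definition eps :: form where
  "eps w = (if w = [] then 1 else 0)"

definition echar :: form where
  "echar w = (if \<exists>P. w = [P] \<and> card P = 1 then 1 else 0)"

fun conv_pow :: "form \<Rightarrow> nat \<Rightarrow> form" where
  "conv_pow f 0 = eps"
| "conv_pow f (Suc m) = conv f (conv_pow f m)"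

definition psi_star :: form where
  "psi_star w = (\<Sum>m. conv_pow echar m w / fact m)"

definition prec_eq :: "form \<Rightarrow> bool" where
  "prec_eq \<psi> \<longleftrightarrow> (\<forall>w. valid_word w \<longrightarrow> \<psi> w = eps w + dprec echar \<psi> w)"

definition succ_eq :: "form \<Rightarrow> bool" where
  "succ_eq \<psi> \<longleftrightarrow> (\<forall>w. valid_word w \<longrightarrow> \<psi> w = eps w + dsucc \<psi> echar w)"

definition boolean_ncp :: "nat set set \<Rightarrow> bool" where
  "boolean_ncp P \<longleftrightarrow> (\<forall>\<pi>\<in>P. Conv \<pi> = \<pi>)"

definition heap_orderings :: "nat set set \<Rightarrow> (nat set \<Rightarrow> nat) set" where
  "heap_orderings P = {\<sigma> \<in> extensional P. bij_betw \<sigma> P {1..card P} \<and>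
     (\<forall>\<pi>\<in>P. \<forall>\<rho>\<in>P. \<rho> \<noteq> \<pi> \<and> Conv \<pi> \<inter> \<rho> \<noteq> {} \<longrightarrow> \<sigma> \<pi> < \<sigma> \<rho>)}"

definition ho :: "nat set set \<Rightarrow> nat" where
  "ho P = card (heap_orderings P)"

end

theory Submission
  imports Defs
begin


definition fdisj :: "nat set set \<Rightarrow> bool" where
  "fdisj Q \<longleftrightarrow> finite Q \<and> (\<forall>\<pi>\<in>Q. finite \<pi> \<and> \<pi> \<noteq> {}) \<and> disjoint Q"

lemma fdisj_subset: "fdisj P \<Longrightarrow> U \<subseteq> P \<Longrightarrow> fdisj U"
  unfolding fdisj_def by (auto intro: finite_subset pairwise_subset)

lemma fdisj_finU: "fdisj Q \<Longrightarrow> finite (\<Union>Q)"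
  unfolding fdisj_def by auto

lemma fdisj_same: "fdisj Q \<Longrightarrow> \<pi> \<in> Q \<Longrightarrow> \<rho> \<in> Q \<Longrightarrow> x \<in> \<pi> \<Longrightarrow> x \<in> \<rho> \<Longrightarrow> \<pi> = \<rho>"
  unfolding fdisj_def disjoint_def by blast

lemma ncp_fdisj: assumes "ncp P" shows "fdisj P"
proof -
  obtain n where n: "partition_on {1..n} P" using assms unfolding ncp_def by auto
  hence U: "\<Union>P = {1..n}" and d: "disjoint P" and e: "{} \<notin> P" unfolding partition_on_def by auto
  have "finite P" using U by (metis finite_UnionD finite_atLeastAtMost)
  moreover have "\<forall>\<pi>\<in>P. finite \<pi> \<and> \<pi> \<noteq> {}" using U e
    by (metis Union_upper finite_atLeastAtMost finite_subset)
  ultimately show ?thesis using d unfolding fdisj_def by auto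
qed

lemma rank_less: "finite A \<Longrightarrow> x \<in> A \<Longrightarrow> x < y \<Longrightarrow> rank A x < rank A y"
proof -
  assume f: "finite A" and x: "x \<in> A" and xy: "x < y"
  have "{z\<in>A. z < x} \<subset> {z\<in>A. z < y}" using x xy by auto
  hence "card {z\<in>A. z < x} < card {z\<in>A. z < y}" using f by (intro psubset_card_mono) auto
  thus ?thesis unfolding rank_def by simp
qed

lemma rank_mono: "finite A \<Longrightarrow> x \<le> y \<Longrightarrow> rank A x \<le> rank A y"
  unfolding rank_def by (auto intro!: card_mono)

lemma rank_less_iff: "finite A \<Longrightarrow> x \<in> A \<Longrightarrow> y \<in> A \<Longrightarrow> rank A x < rank A y \<longleftrightarrow> x < y"
  by (metis linorder_neq_iff order_less_asym rank_less)

lemma rank_inj: "finite A \<Longrightarrow> inj_on (rank A) A"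
  by (metis inj_onI linorder_neq_iff order_less_irrefl rank_less)

lemma rank_image: assumes f: "finite A" shows "rank A ` A = {1..card A}"
proof -
  have sub: "rank A ` A \<subseteq> {1..card A}"
  proof
    fix r assume "r \<in> rank A ` A"
    then obtain x where x: "x \<in> A" and r: "r = rank A x" by auto
    have "{z\<in>A. z < x} \<subseteq> A - {x}" by auto
    hence "card {z\<in>A. z < x} \<le> card (A - {x})" using f by (intro card_mono) auto
    also have "\<dots> < card A" using f x by (metis card_Diff1_less)
    finally show "r \<in> {1..card A}" using r unfolding rank_def by auto
  qed
  have "card (rank A ` A) = card A" using rank_inj[OF f] by (simp add: card_image)
  thus ?thesis using sub by (intro card_subset_eq) auto
qed

definition smono :: "nat set \<Rightarrow> (nat \<Rightarrow> nat) \<Rightarrow> bool" where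
  "smono S f \<longleftrightarrow> (\<forall>x\<in>S. \<forall>y\<in>S. x < y \<longrightarrow> f x < f y)"

lemma smono_rank: "finite A \<Longrightarrow> smono A (rank A)"
  unfolding smono_def using rank_less by blast

lemma smono_less_iff: "smono S f \<Longrightarrow> x \<in> S \<Longrightarrow> y \<in> S \<Longrightarrow> f x < f y \<longleftrightarrow> x < y"
  unfolding smono_def by (metis linorder_neq_iff order_less_asym)

lemma smono_le_iff: "smono S f \<Longrightarrow> x \<in> S \<Longrightarrow> y \<in> S \<Longrightarrow> f x \<le> f y \<longleftrightarrow> x \<le> y"
  by (meson not_le smono_less_iff)

lemma smono_inj: "smono S f \<Longrightarrow> inj_on f S"
  unfolding inj_on_def by (metis linorder_neq_iff smono_less_iff order_less_irrefl)

lemma smono_Min: assumes "smono S f" "\<pi> \<subseteq> S" "finite \<pi>" "\<pi> \<noteq> {}"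
  shows "Min (f ` \<pi>) = f (Min \<pi>)"
proof (rule Min_eqI)
  show "finite (f ` \<pi>)" using assms by auto
  show "f (Min \<pi>) \<in> f ` \<pi>" using assms by auto
  fix y assume "y \<in> f ` \<pi>"
  then obtain x where "x \<in> \<pi>" "y = f x" by auto
  thus "f (Min \<pi>) \<le> y" using assms smono_le_iff[OF assms(1)] by (meson Min_in Min_le subsetD)
qed

lemma smono_Max: assumes "smono S f" "\<pi> \<subseteq> S" "finite \<pi>" "\<pi> \<noteq> {}"
  shows "Max (f ` \<pi>) = f (Max \<pi>)"
proof (rule Max_eqI)
  show "finite (f ` \<pi>)" using assms by auto
  show "f (Max \<pi>) \<in> f ` \<pi>" using assms by auto
  fix y assume "y \<in> f ` \<pi>"
  then obtain x where "x \<in> \<pi>" "y = f x" by auto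
  thus "y \<le> f (Max \<pi>)" using assms smono_le_iff[OF assms(1)] by (meson Max_in Max_ge subsetD)
qed

lemma smono_Conv: assumes "smono S f" "\<pi> \<subseteq> S" "finite \<pi>" "\<pi> \<noteq> {}" "\<rho> \<subseteq> S"
  shows "(Conv (f ` \<pi>) \<inter> f ` \<rho> = {}) \<longleftrightarrow> (Conv \<pi> \<inter> \<rho> = {})"
proof -
  have mi: "Min \<pi> \<in> S" "Max \<pi> \<in> S" using assms Min_in Max_in by auto
  have "Conv (f ` \<pi>) \<inter> f ` \<rho> = f ` (Conv \<pi> \<inter> \<rho>)"
    unfolding Conv_def smono_Min[OF assms(1-4)] smono_Max[OF assms(1-4)]
    using smono_le_iff[OF assms(1)] mi assms(5) by auto
  thus ?thesis by simp
qed


lemma std_alt: "std Q = (image (rank (\<Union>Q))) ` Q" unfolding std_def by simp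

lemma std_inj: assumes "fdisj Q" shows "inj_on (image (rank (\<Union>Q))) Q"
proof (rule inj_onI)
  fix \<pi> \<rho> assume p: "\<pi> \<in> Q" and r: "\<rho> \<in> Q" and eq: "rank (\<Union>Q) ` \<pi> = rank (\<Union>Q) ` \<rho>"
  have inj: "inj_on (rank (\<Union>Q)) (\<Union>Q)" using rank_inj fdisj_finU[OF assms] by blast
  obtain y where y: "y \<in> \<pi>" using p assms unfolding fdisj_def by auto
  then obtain z where z: "z \<in> \<rho>" "rank (\<Union>Q) y = rank (\<Union>Q) z" using eq by (metis imageI image_iff)
  hence "y = z" using inj p r y z by (auto simp: inj_on_def)
  thus "\<pi> = \<rho>" using fdisj_same[OF assms p r] y z by auto
qed

lemma card_std: "fdisj Q \<Longrightarrow> card (std Q) = card Q"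
  unfolding std_alt by (simp add: card_image std_inj)

lemma Union_std: "fdisj Q \<Longrightarrow> \<Union>(std Q) = {1..card (\<Union>Q)}"
proof -
  assume a: "fdisj Q"
  have "\<Union>(std Q) = rank (\<Union>Q) ` \<Union>Q" unfolding std_alt by auto
  thus ?thesis using rank_image[OF fdisj_finU[OF a]] by simp
qed

lemma std_empty[simp]: "std {} = {}" unfolding std_def by simp

lemma std_rel: assumes "fdisj Q" "\<pi> \<in> Q" "\<rho> \<in> Q"
  shows "(Conv (rank (\<Union>Q) ` \<pi>) \<inter> rank (\<Union>Q) ` \<rho> = {}) \<longleftrightarrow> (Conv \<pi> \<inter> \<rho> = {})"
  using assms by (intro smono_Conv[OF smono_rank[OF fdisj_finU]]) (auto simp: fdisj_def)

lemma fdisj_std: assumes "fdisj Q" shows "fdisj (std Q)"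
proof -
  have "finite (std Q)" using assms unfolding fdisj_def std_def by auto
  moreover have "\<forall>\<pi>\<in>std Q. finite \<pi> \<and> \<pi> \<noteq> {}" using assms unfolding fdisj_def std_def by auto
  moreover have "disjoint (std Q)"
    unfolding disjoint_def
  proof (intro ballI impI)
    fix a b assume a: "a \<in> std Q" and b: "b \<in> std Q" and ab: "a \<noteq> b"
    then obtain \<pi> \<rho> where p: "\<pi> \<in> Q" "a = rank (\<Union>Q) ` \<pi>" and r: "\<rho> \<in> Q" "b = rank (\<Union>Q) ` \<rho>"
      unfolding std_alt by auto
    have inj: "inj_on (rank (\<Union>Q)) (\<Union>Q)" using rank_inj fdisj_finU[OF assms] by blast
    have "\<pi> \<noteq> \<rho>" using ab p r by auto
    hence "\<pi> \<inter> \<rho> = {}" using fdisj_same[OF assms p(1) r(1)] by auto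
    show "a \<inter> b = {}"
    proof (rule ccontr)
      assume "a \<inter> b \<noteq> {}"
      then obtain u v where u: "u \<in> \<pi>" "v \<in> \<rho>" "rank (\<Union>Q) u = rank (\<Union>Q) v" using p r by auto
      hence "u = v" using inj p r unfolding inj_on_def by blast
      thus False using u \<open>\<pi> \<inter> \<rho> = {}\<close> by auto
    qed
  qed
  ultimately show ?thesis unfolding fdisj_def by auto
qed

lemma noncrossingD: "noncrossing Q \<Longrightarrow> \<pi>\<in>Q \<Longrightarrow> \<rho>\<in>Q \<Longrightarrow> \<pi>\<noteq>\<rho> \<Longrightarrow> a<c \<Longrightarrow> c<b \<Longrightarrow> b<d
  \<Longrightarrow> a\<in>\<pi> \<Longrightarrow> b\<in>\<pi> \<Longrightarrow> c\<in>\<rho> \<Longrightarrow> d\<in>\<rho> \<Longrightarrow> False"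
proof -
  assume nc: "noncrossing Q" and h: "\<pi>\<in>Q" "\<rho>\<in>Q" "\<pi>\<noteq>\<rho>" "a<c" "c<b" "b<d" "a\<in>\<pi>" "b\<in>\<pi>" "c\<in>\<rho>" "d\<in>\<rho>"
  have "\<exists>a b c d. a < c \<and> c < b \<and> b < d \<and> a \<in> \<pi> \<and> b \<in> \<pi> \<and> c \<in> \<rho> \<and> d \<in> \<rho>"
    using h by (intro exI[of _ a] exI[of _ b] exI[of _ c] exI[of _ d]) simp
  hence "\<exists>\<pi>\<in>Q. \<exists>\<rho>\<in>Q. \<pi> \<noteq> \<rho> \<and> (\<exists>a b c d. a < c \<and> c < b \<and> b < d \<and> a \<in> \<pi> \<and> b \<in> \<pi> \<and> c \<in> \<rho> \<and> d \<in> \<rho>)"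
    using h(1-3) by (intro bexI[of _ \<pi>] bexI[of _ \<rho>] conjI) 
  thus False by (rule notE[OF nc[unfolded noncrossing_def]])
qed

lemma noncrossing_std: assumes "fdisj Q" "noncrossing Q" shows "noncrossing (std Q)"
proof -
  let ?f = "rank (\<Union>Q)"
  have sm: "smono (\<Union>Q) ?f" using smono_rank fdisj_finU[OF assms(1)] by blast
  show ?thesis unfolding noncrossing_def
  proof (rule notI, elim bexE exE conjE)
    fix A B a b c d assume A: "A \<in> std Q" and B: "B \<in> std Q" and AB: "A \<noteq> B"
      and o: "a < c" "c < b" "b < d" and m: "a \<in> A" "b \<in> A" "c \<in> B" "d \<in> B"
    have A': "A \<in> (image ?f) ` Q" using A by (simp add: std_alt)
    have B': "B \<in> (image ?f) ` Q" using B by (simp add: std_alt)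
    obtain \<pi> where p2: "A = ?f ` \<pi>" and p1: "\<pi> \<in> Q" using A' by (rule imageE)
    obtain \<rho> where r2: "B = ?f ` \<rho>" and r1: "\<rho> \<in> Q" using B' by (rule imageE)
    note p = p1 p2 and r = r1 r2
    have "a \<in> ?f ` \<pi>" "b \<in> ?f ` \<pi>" using m p2 by simp_all
    then obtain a' b' where a': "a = ?f a'" "a' \<in> \<pi>" and b': "b = ?f b'" "b' \<in> \<pi>" by (meson imageE)
    have "c \<in> ?f ` \<rho>" "d \<in> ?f ` \<rho>" using m r2 by simp_all
    then obtain c' d' where c': "c = ?f c'" "c' \<in> \<rho>" and d': "d = ?f d'" "d' \<in> \<rho>" by (meson imageE)
    have U: "a' \<in> \<Union>Q" "b' \<in> \<Union>Q" "c' \<in> \<Union>Q" "d' \<in> \<Union>Q"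
      using a'(2) b'(2) c'(2) d'(2) p(1) r(1) by blast+
    have "a' < c'" using o(1) a'(1) c'(1) smono_less_iff[OF sm U(1) U(3)] by simp
    moreover have "c' < b'" using o(2) b'(1) c'(1) smono_less_iff[OF sm U(3) U(2)] by simp
    moreover have "b' < d'" using o(3) b'(1) d'(1) smono_less_iff[OF sm U(2) U(4)] by simp
    moreover have "\<pi> \<noteq> \<rho>" using AB p(2) r(2) by blast
    ultimately show False using noncrossingD[OF assms(2) p(1) r(1)] a'(2) b'(2) c'(2) d'(2) by blast
  qed
qed

lemma ncp_std: assumes "fdisj Q" "noncrossing Q" shows "ncp (std Q)"
proof -
  have "partition_on {1..card (\<Union>Q)} (std Q)"
  proof -
    have "fdisj (std Q)" by (rule fdisj_std[OF assms(1)])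
    hence "disjoint (std Q)" "{} \<notin> std Q" unfolding fdisj_def by auto
    thus ?thesis unfolding partition_on_def using Union_std[OF assms(1)] by simp
  qed
  thus ?thesis using noncrossing_std[OF assms] unfolding ncp_def by auto
qed

lemma noncrossing_subset: assumes "noncrossing P" "U \<subseteq> P" shows "noncrossing U"
  unfolding noncrossing_def
proof (rule notI, elim bexE exE conjE)
  fix \<pi> \<rho> a b c d assume "\<pi> \<in> U" "\<rho> \<in> U" "\<pi> \<noteq> \<rho>" "a < c" "c < b" "b < d" "a \<in> \<pi>" "b \<in> \<pi>" "c \<in> \<rho>" "d \<in> \<rho>"
  thus False using noncrossingD[OF assms(1)] assms(2) by (meson subsetD)
qed

lemma rank_id: assumes "x \<in> {1..n}" shows "rank {1..n} x = x"
proof -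
  have "{y \<in> {1..n}. y < x} = {1..<x}" using assms by auto
  thus ?thesis unfolding rank_def using assms by auto
qed

lemma std_id: assumes "partition_on {1..n} P" shows "std P = P"
proof -
  have U: "\<Union>P = {1..n}" using assms unfolding partition_on_def by auto
  have "\<And>\<pi>. \<pi> \<in> P \<Longrightarrow> rank {1..n} ` \<pi> = \<pi>" using rank_id U
  proof -
    fix \<pi> assume "\<pi> \<in> P"
    hence "\<forall>x\<in>\<pi>. rank {1..n} x = x" using rank_id U by blast
    thus "rank {1..n} ` \<pi> = \<pi>" by simp
  qed
  thus ?thesis unfolding std_def U by simp
qed

lemma ncp_std_id: "ncp P \<Longrightarrow> std P = P"
  unfolding ncp_def using std_id by blast


definition isouter :: "nat set set \<Rightarrow> nat set \<Rightarrow> bool" where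
  "isouter Q x \<longleftrightarrow> x \<in> Q \<and> (\<forall>\<pi>\<in>Q. \<pi> \<noteq> x \<longrightarrow> Conv \<pi> \<inter> x = {})"

lemma bij_char: "finite Q \<Longrightarrow> bij_betw \<sigma> Q {1..card Q} \<longleftrightarrow> inj_on \<sigma> Q \<and> \<sigma> ` Q \<subseteq> {1..card Q}"
  unfolding bij_betw_def by (metis card_atLeastAtMost card_image card_subset_eq diff_Suc_1 finite_atLeastAtMost order_refl)

lemma ho_empty: "ho {} = 1"
proof -
  have "heap_orderings {} = {\<lambda>_. undefined}"
    unfolding heap_orderings_def by (auto simp: bij_betw_def extensional_def)
  thus ?thesis unfolding ho_def by simp
qed

lemma finite_HO: "finite Q \<Longrightarrow> finite (heap_orderings Q)"
proof -
  assume f: "finite Q"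
  have "heap_orderings Q \<subseteq> PiE Q (\<lambda>_. {1..card Q})"
    unfolding heap_orderings_def PiE_def bij_betw_def by auto
  thus ?thesis using f by (meson finite_PiE finite_atLeastAtMost finite_subset)
qed

lemma card_fix1: assumes f: "finite Q" and x: "isouter Q x"
  shows "card {\<sigma> \<in> heap_orderings Q. \<sigma> x = 1} = ho (Q - {x})"
proof -
  let ?H = "{\<sigma> \<in> heap_orderings Q. \<sigma> x = 1}"
  let ?Q = "Q - {x}"
  define \<Phi> where "\<Phi> = (\<lambda>\<sigma>::nat set \<Rightarrow> nat. restrict (\<lambda>y. \<sigma> y - 1) ?Q)"
  define \<Psi> where "\<Psi> = (\<lambda>\<tau>::nat set \<Rightarrow> nat. (\<lambda>y. if y = x then 1 else if y \<in> Q then \<tau> y + 1 else undefined))"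
  have xQ: "x \<in> Q" using x unfolding isouter_def by auto
  have cQ: "card ?Q = card Q - 1" using xQ f by simp
  have cpos: "card Q \<ge> 1" using xQ f by (metis One_nat_def Suc_leI card_gt_0_iff empty_iff)
  have fQ: "finite ?Q" using f by auto
  have H1: "\<Phi> \<sigma> \<in> heap_orderings ?Q" if s: "\<sigma> \<in> ?H" for \<sigma>
  proof -
    have inj: "inj_on \<sigma> Q" and rg: "\<sigma> ` Q \<subseteq> {1..card Q}" and sx: "\<sigma> x = 1"
      and mo: "\<forall>\<pi>\<in>Q. \<forall>\<rho>\<in>Q. \<rho> \<noteq> \<pi> \<and> Conv \<pi> \<inter> \<rho> \<noteq> {} \<longrightarrow> \<sigma> \<pi> < \<sigma> \<rho>"
      using s bij_char[OF f] unfolding heap_orderings_def by auto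
    have ge2: "\<sigma> y \<ge> 2" if "y \<in> ?Q" for y
    proof -
      have "\<sigma> y \<noteq> 1" using inj sx that xQ unfolding inj_on_def by fastforce
      moreover have "\<sigma> y \<ge> 1" using rg that by auto
      ultimately show ?thesis by auto
    qed
    have "inj_on (\<Phi> \<sigma>) ?Q"
      unfolding inj_on_def \<Phi>_def
    proof (intro ballI impI)
      fix y z assume y: "y \<in> ?Q" and z: "z \<in> ?Q" and e: "restrict (\<lambda>y. \<sigma> y - 1) ?Q y = restrict (\<lambda>y. \<sigma> y - 1) ?Q z"
      hence "\<sigma> y = \<sigma> z" using ge2[OF y] ge2[OF z] by auto
      thus "y = z" using inj y z unfolding inj_on_def by auto
    qed
    moreover have "\<Phi> \<sigma> ` ?Q \<subseteq> {1..card ?Q}"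
    proof
      fix z assume "z \<in> \<Phi> \<sigma> ` ?Q"
      then obtain y where y: "y \<in> ?Q" "z = \<Phi> \<sigma> y" by auto
      have "\<sigma> y \<in> {1..card Q}" using rg y(1) by auto
      moreover have "\<sigma> y \<ge> 2" using ge2 y(1) by auto
      ultimately show "z \<in> {1..card ?Q}" using cQ y unfolding \<Phi>_def by auto
    qed
    moreover have "\<forall>\<pi>\<in>?Q. \<forall>\<rho>\<in>?Q. \<rho> \<noteq> \<pi> \<and> Conv \<pi> \<inter> \<rho> \<noteq> {} \<longrightarrow> \<Phi> \<sigma> \<pi> < \<Phi> \<sigma> \<rho>"
    proof (intro ballI impI)
      fix \<pi> \<rho> assume p: "\<pi> \<in> ?Q" and r: "\<rho> \<in> ?Q" and c: "\<rho> \<noteq> \<pi> \<and> Conv \<pi> \<inter> \<rho> \<noteq> {}"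
      have "\<sigma> \<pi> < \<sigma> \<rho>" using mo p r c by auto
      moreover have "\<sigma> \<pi> \<ge> 2" using ge2 p by auto
      ultimately show "\<Phi> \<sigma> \<pi> < \<Phi> \<sigma> \<rho>" using p r unfolding \<Phi>_def by auto
    qed
    ultimately show ?thesis unfolding heap_orderings_def using bij_char[OF fQ] \<Phi>_def by auto
  qed
  have H2: "\<Psi> \<tau> \<in> ?H" and H3: "\<Phi> (\<Psi> \<tau>) = \<tau>" if t: "\<tau> \<in> heap_orderings ?Q" for \<tau>
  proof -
    have inj: "inj_on \<tau> ?Q" and rg: "\<tau> ` ?Q \<subseteq> {1..card ?Q}" and ext: "\<tau> \<in> extensional ?Q"
      and mo: "\<forall>\<pi>\<in>?Q. \<forall>\<rho>\<in>?Q. \<rho> \<noteq> \<pi> \<and> Conv \<pi> \<inter> \<rho> \<noteq> {} \<longrightarrow> \<tau> \<pi> < \<tau> \<rho>"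
      using t bij_char[OF fQ] unfolding heap_orderings_def by auto
    have t1: "\<tau> y \<ge> 1" "\<tau> y \<le> card Q - 1" if "y \<in> ?Q" for y using rg cQ that by auto
    have v1: "\<Psi> \<tau> u = \<tau> u + 1" if "u \<in> Q" "u \<noteq> x" for u using that unfolding \<Psi>_def by simp
    have v2: "\<Psi> \<tau> x = 1" unfolding \<Psi>_def by simp
    have "inj_on (\<Psi> \<tau>) Q"
    proof (rule inj_onI)
      fix y z assume y: "y \<in> Q" and z: "z \<in> Q" and e: "\<Psi> \<tau> y = \<Psi> \<tau> z"
      show "y = z"
      proof (cases "y = x")
        case True
        show ?thesis
        proof (rule ccontr)
          assume "y \<noteq> z"
          hence "z \<noteq> x" using True by simp
          hence "\<Psi> \<tau> z = \<tau> z + 1" "\<tau> z \<ge> 1" using v1 z t1 by auto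
          thus False using e True v2 by simp
        qed
      next
        case False
        show ?thesis
        proof (cases "z = x")
          case True
          hence "\<Psi> \<tau> y = \<tau> y + 1" "\<tau> y \<ge> 1" using v1 y t1 False by auto
          thus ?thesis using e True v2 by simp
        next
          case F2: False
          have "\<tau> y = \<tau> z" using e v1[OF y False] v1[OF z F2] by simp
          thus ?thesis using inj False F2 y z unfolding inj_on_def by blast
        qed
      qed
    qed
    moreover have "\<Psi> \<tau> ` Q \<subseteq> {1..card Q}"
    proof
      fix v assume "v \<in> \<Psi> \<tau> ` Q"
      then obtain y where y: "y \<in> Q" "v = \<Psi> \<tau> y" by auto
      show "v \<in> {1..card Q}"
      proof (cases "y = x")
        case True thus ?thesis using y cpos unfolding \<Psi>_def by auto
      next
        case False thus ?thesis using y t1[of y] cpos unfolding \<Psi>_def by auto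
      qed
    qed
    moreover have "\<Psi> \<tau> \<in> extensional Q" unfolding \<Psi>_def extensional_def using xQ by auto
    moreover have "\<forall>\<pi>\<in>Q. \<forall>\<rho>\<in>Q. \<rho> \<noteq> \<pi> \<and> Conv \<pi> \<inter> \<rho> \<noteq> {} \<longrightarrow> \<Psi> \<tau> \<pi> < \<Psi> \<tau> \<rho>"
    proof (intro ballI impI)
      fix \<pi> \<rho> assume p: "\<pi> \<in> Q" and r: "\<rho> \<in> Q" and c: "\<rho> \<noteq> \<pi> \<and> Conv \<pi> \<inter> \<rho> \<noteq> {}"
      have rx: "\<rho> \<noteq> x" using x p c unfolding isouter_def by auto
      show "\<Psi> \<tau> \<pi> < \<Psi> \<tau> \<rho>"
      proof (cases "\<pi> = x")
        case True thus ?thesis using v1[OF r rx] v2 t1[of \<rho>] r rx by simp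
      next
        case False
        hence "\<tau> \<pi> < \<tau> \<rho>" using mo p r c rx by blast
        thus ?thesis using v1[OF r rx] v1[OF p False] by simp
      qed
    qed
    ultimately show "\<Psi> \<tau> \<in> ?H" unfolding heap_orderings_def using bij_char[OF f] \<Psi>_def by auto
    show "\<Phi> (\<Psi> \<tau>) = \<tau>" using ext unfolding \<Phi>_def \<Psi>_def restrict_def extensional_def by auto
  qed
  have "inj_on \<Phi> ?H"
  proof (rule inj_onI)
    fix \<sigma> \<sigma>' assume s: "\<sigma> \<in> ?H" and s': "\<sigma>' \<in> ?H" and e: "\<Phi> \<sigma> = \<Phi> \<sigma>'"
    have a: "inj_on \<sigma> Q" "\<sigma> ` Q \<subseteq> {1..card Q}" "\<sigma> x = 1" "\<sigma> \<in> extensional Q"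
      using s bij_char[OF f] unfolding heap_orderings_def by auto
    have b: "inj_on \<sigma>' Q" "\<sigma>' ` Q \<subseteq> {1..card Q}" "\<sigma>' x = 1" "\<sigma>' \<in> extensional Q"
      using s' bij_char[OF f] unfolding heap_orderings_def by auto
    show "\<sigma> = \<sigma>'"
    proof
      fix y
      show "\<sigma> y = \<sigma>' y"
      proof (cases "y \<in> ?Q")
        case True
        have yQ: "y \<in> Q" using True by blast
        have "\<sigma> y \<in> {1..card Q}" "\<sigma>' y \<in> {1..card Q}" using a(2) b(2) yQ by blast+
        hence "\<sigma> y \<ge> 1" "\<sigma>' y \<ge> 1" by auto
        moreover have "\<Phi> \<sigma> y = \<Phi> \<sigma>' y" using e by simp
        hence "\<sigma> y - 1 = \<sigma>' y - 1" using True unfolding \<Phi>_def by simp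
        ultimately show ?thesis by auto
      next
        case False
        show ?thesis
        proof (cases "y = x")
          case True thus ?thesis using a(3) b(3) by simp
        next
          case F2: False
          hence "y \<notin> Q" using False by blast
          thus ?thesis using extensional_arb[OF a(4)] extensional_arb[OF b(4)] by simp
        qed
      qed
    qed
  qed
  note inj = this
  have "\<Phi> ` ?H = heap_orderings ?Q"
  proof
    show "\<Phi> ` ?H \<subseteq> heap_orderings ?Q" using H1 by blast
    show "heap_orderings ?Q \<subseteq> \<Phi> ` ?H"
    proof
      fix \<tau> assume t: "\<tau> \<in> heap_orderings ?Q"
      show "\<tau> \<in> \<Phi> ` ?H" by (rule image_eqI[of \<tau> \<Phi> "\<Psi> \<tau>", OF H3[OF t, symmetric] H2[OF t]])
    qed
  qed
  hence "card ?H = card (heap_orderings ?Q)" using card_image[OF inj] by simp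
  thus ?thesis unfolding ho_def .
qed

lemma ho_rec: assumes f: "finite Q" and ne: "Q \<noteq> {}"
  shows "ho Q = (\<Sum>x\<in>{x\<in>Q. isouter Q x}. ho (Q - {x}))"
proof -
  let ?O = "{x\<in>Q. isouter Q x}"
  have "heap_orderings Q = (\<Union>x\<in>?O. {\<sigma> \<in> heap_orderings Q. \<sigma> x = 1})"
  proof (rule set_eqI, rule iffI)
    fix \<sigma> assume s: "\<sigma> \<in> heap_orderings Q"
    have b: "bij_betw \<sigma> Q {1..card Q}" and rg: "\<sigma> ` Q \<subseteq> {1..card Q}"
      and mo: "\<forall>\<pi>\<in>Q. \<forall>\<rho>\<in>Q. \<rho> \<noteq> \<pi> \<and> Conv \<pi> \<inter> \<rho> \<noteq> {} \<longrightarrow> \<sigma> \<pi> < \<sigma> \<rho>"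
      using s bij_char[OF f] unfolding heap_orderings_def by auto
    have "1 \<in> {1..card Q}" using f ne by (simp add: Suc_leI card_gt_0_iff)
    then obtain x where x: "x \<in> Q" "\<sigma> x = 1" using b unfolding bij_betw_def by (metis imageE)
    have "isouter Q x" unfolding isouter_def
    proof (intro conjI ballI impI)
      fix \<pi> assume p: "\<pi> \<in> Q" "\<pi> \<noteq> x"
      show "Conv \<pi> \<inter> x = {}"
      proof (rule ccontr)
        assume cx: "Conv \<pi> \<inter> x \<noteq> {}"
        have "\<sigma> \<pi> < \<sigma> x" using mo p x(1) cx by blast
        moreover have "\<sigma> \<pi> \<ge> 1" using rg p by auto
        ultimately show False using x by auto
      qed
    qed (use x in auto)
    thus "\<sigma> \<in> (\<Union>x\<in>?O. {\<sigma> \<in> heap_orderings Q. \<sigma> x = 1})" using s x by auto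
  qed auto
  hence "ho Q = card (\<Union>x\<in>?O. {\<sigma> \<in> heap_orderings Q. \<sigma> x = 1})" unfolding ho_def by simp
  also have "\<dots> = (\<Sum>x\<in>?O. card {\<sigma> \<in> heap_orderings Q. \<sigma> x = 1})"
  proof (rule card_UN_disjoint)
    show "finite ?O" using f by auto
    show "\<forall>i\<in>?O. finite {\<sigma> \<in> heap_orderings Q. \<sigma> i = 1}" using finite_HO[OF f] by auto
    show "\<forall>i\<in>?O. \<forall>j\<in>?O. i \<noteq> j \<longrightarrow> {\<sigma> \<in> heap_orderings Q. \<sigma> i = 1} \<inter> {\<sigma> \<in> heap_orderings Q. \<sigma> j = 1} = {}"
    proof (intro ballI impI)
      fix i j assume i: "i \<in> ?O" and j: "j \<in> ?O" and ij: "i \<noteq> j"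
      show "{\<sigma> \<in> heap_orderings Q. \<sigma> i = 1} \<inter> {\<sigma> \<in> heap_orderings Q. \<sigma> j = 1} = {}"
      proof (rule ccontr)
        assume "{\<sigma> \<in> heap_orderings Q. \<sigma> i = 1} \<inter> {\<sigma> \<in> heap_orderings Q. \<sigma> j = 1} \<noteq> {}"
        then obtain \<sigma> where s: "\<sigma> \<in> heap_orderings Q" "\<sigma> i = 1" "\<sigma> j = 1" by blast
        hence "inj_on \<sigma> Q" unfolding heap_orderings_def bij_betw_def by blast
        thus False using s i j ij unfolding inj_on_def by force
      qed
    qed
  qed
  also have "\<dots> = (\<Sum>x\<in>?O. ho (Q - {x}))" using card_fix1[OF f] by auto
  finally show ?thesis .
qed


lemma isouter_image:
  assumes inj: "inj_on F Q" and rel: "\<forall>\<pi>\<in>Q. \<forall>\<rho>\<in>Q. (Conv (F \<pi>) \<inter> F \<rho> = {}) \<longleftrightarrow> (Conv \<pi> \<inter> \<rho> = {})"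
    and x: "x \<in> Q"
  shows "isouter (F ` Q) (F x) \<longleftrightarrow> isouter Q x"
proof
  assume a: "isouter (F ` Q) (F x)"
  show "isouter Q x" unfolding isouter_def
  proof (intro conjI ballI impI)
    fix \<pi> assume p: "\<pi> \<in> Q" "\<pi> \<noteq> x"
    have "F \<pi> \<noteq> F x" using inj p x unfolding inj_on_def by blast
    hence "Conv (F \<pi>) \<inter> F x = {}" using a p(1) unfolding isouter_def by blast
    thus "Conv \<pi> \<inter> x = {}" using rel p(1) x by blast
  qed (rule x)
next
  assume a: "isouter Q x"
  show "isouter (F ` Q) (F x)" unfolding isouter_def
  proof (intro conjI ballI impI)
    fix \<pi>' assume p: "\<pi>' \<in> F ` Q" "\<pi>' \<noteq> F x"
    then obtain \<pi> where p1: "\<pi> \<in> Q" "\<pi>' = F \<pi>" by blast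
    hence "\<pi> \<noteq> x" using p(2) by blast
    hence "Conv \<pi> \<inter> x = {}" using a p1(1) unfolding isouter_def by blast
    thus "Conv \<pi>' \<inter> F x = {}" using rel p1 x by blast
  qed (use x in blast)
qed

lemma ho_image:
  assumes "finite Q" "inj_on F Q" "\<forall>\<pi>\<in>Q. \<forall>\<rho>\<in>Q. (Conv (F \<pi>) \<inter> F \<rho> = {}) \<longleftrightarrow> (Conv \<pi> \<inter> \<rho> = {})"
  shows "ho (F ` Q) = ho Q"
  using assms
proof (induction "card Q" arbitrary: Q rule: less_induct)
  case less
  show ?case
  proof (cases "Q = {}")
    case True thus ?thesis by simp
  next
    case False
    let ?O = "{x\<in>Q. isouter Q x}"
    have fF: "finite (F ` Q)" "F ` Q \<noteq> {}" using less.prems False by auto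
    have O: "{y\<in>F ` Q. isouter (F ` Q) y} = F ` ?O"
    proof
      show "{y\<in>F ` Q. isouter (F ` Q) y} \<subseteq> F ` ?O"
      proof
        fix y assume "y \<in> {y\<in>F ` Q. isouter (F ` Q) y}"
        then obtain x where x: "x \<in> Q" "y = F x" "isouter (F ` Q) (F x)" by blast
        hence "isouter Q x" using isouter_image[OF less.prems(2,3) x(1)] by blast
        thus "y \<in> F ` ?O" using x by blast
      qed
      show "F ` ?O \<subseteq> {y\<in>F ` Q. isouter (F ` Q) y}"
      proof
        fix y assume "y \<in> F ` ?O"
        then obtain x where x: "x \<in> Q" "y = F x" "isouter Q x" by blast
        hence "isouter (F ` Q) (F x)" using isouter_image[OF less.prems(2,3) x(1)] by blast
        thus "y \<in> {y\<in>F ` Q. isouter (F ` Q) y}" using x by blast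
      qed
    qed
    have injO: "inj_on F ?O" using less.prems(2) by (rule inj_on_subset) auto
    have "ho (F ` Q) = (\<Sum>y\<in>{y\<in>F ` Q. isouter (F ` Q) y}. ho (F ` Q - {y}))"
      by (rule ho_rec[OF fF])
    also have "\<dots> = (\<Sum>x\<in>?O. ho (F ` Q - {F x}))"
      unfolding O by (rule sum.reindex[OF injO, unfolded comp_def])
    also have "\<dots> = (\<Sum>x\<in>?O. ho (Q - {x}))"
    proof (rule sum.cong[OF refl])
      fix x assume x: "x \<in> ?O"
      have xQ: "x \<in> Q" using x by simp
      have e: "F ` Q - {F x} = F ` (Q - {x})"
        using inj_on_image_set_diff[OF less.prems(2), of Q "{x}"] xQ by simp
      have c1: "card (Q - {x}) < card Q" by (rule card_Diff1_less[OF less.prems(1) xQ])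
      have c2: "inj_on F (Q - {x})" using less.prems(2) by (rule inj_on_subset) auto
      have c3: "\<forall>\<pi>\<in>Q - {x}. \<forall>\<rho>\<in>Q - {x}. (Conv (F \<pi>) \<inter> F \<rho> = {}) \<longleftrightarrow> (Conv \<pi> \<inter> \<rho> = {})"
        using less.prems(3) by blast
      have c4: "finite (Q - {x})" using less.prems(1) by blast
      have "ho (F ` (Q - {x})) = ho (Q - {x})" by (rule less.hyps[OF c1 c4 c2 c3])
      thus "ho (F ` Q - {F x}) = ho (Q - {x})" using e by simp
    qed
    also have "\<dots> = ho Q" using ho_rec[OF less.prems(1) False] by simp
    finally show ?thesis .
  qed
qed

lemma ho_std: assumes "fdisj Q" shows "ho (std Q) = ho Q"
  unfolding std_alt
proof (rule ho_image)
  show "finite Q" using assms unfolding fdisj_def by blast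
  show "inj_on (image (rank (\<Union> Q))) Q" by (rule std_inj[OF assms])
  show "\<forall>\<pi>\<in>Q. \<forall>\<rho>\<in>Q. (Conv (rank (\<Union> Q) ` \<pi>) \<inter> rank (\<Union> Q) ` \<rho> = {}) = (Conv \<pi> \<inter> \<rho> = {})"
    using std_rel[OF assms] by blast
qed

definition rr :: "nat set set \<Rightarrow> real" where
  "rr Q = real (ho Q) / fact (card Q)"

lemma rr_empty[simp]: "rr {} = 1" unfolding rr_def by (simp add: ho_empty)

lemma rr_std: "fdisj Q \<Longrightarrow> rr (std Q) = rr Q"
  unfolding rr_def by (simp add: ho_std card_std)

lemma rr_rec: assumes f: "finite Q" and ne: "Q \<noteq> {}"
  shows "real (card Q) * rr Q = (\<Sum>x\<in>{x\<in>Q. isouter Q x}. rr (Q - {x}))"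
proof -
  obtain k where k: "card Q = Suc k" using f ne by (metis card_gt_0_iff gr0_implies_Suc)
  have c: "card (Q - {x}) = k" if "x \<in> {x\<in>Q. isouter Q x}" for x using that k f by simp
  have "(\<Sum>x\<in>{x\<in>Q. isouter Q x}. rr (Q - {x})) = (\<Sum>x\<in>{x\<in>Q. isouter Q x}. real (ho (Q - {x})) / fact k)"
    unfolding rr_def using c by simp
  also have "\<dots> = real (ho Q) / fact k"
    unfolding ho_rec[OF f ne] by (simp add: sum_divide_distrib)
  also have "\<dots> = real (card Q) * rr Q" unfolding rr_def k by simp
  finally show ?thesis by simp
qed

definition unrel :: "nat set set \<Rightarrow> nat set set \<Rightarrow> bool" where
  "unrel A B \<longleftrightarrow> (\<forall>a\<in>A. \<forall>b\<in>B. Conv a \<inter> b = {} \<and> Conv b \<inter> a = {})"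

lemma isouter_Un_A: assumes u: "unrel A B" and x: "x \<in> A" shows "isouter (A \<union> B) x \<longleftrightarrow> isouter A x"
proof -
  have "\<forall>\<pi>\<in>B. Conv \<pi> \<inter> x = {}" using u x unfolding unrel_def by simp
  thus ?thesis using x unfolding isouter_def by auto
qed

lemma isouter_Un_B: assumes u: "unrel A B" and x: "x \<in> B" shows "isouter (A \<union> B) x \<longleftrightarrow> isouter B x"
proof -
  have "\<forall>\<pi>\<in>A. Conv \<pi> \<inter> x = {}" using u x unfolding unrel_def by simp
  thus ?thesis using x unfolding isouter_def by auto
qed

lemma rr_mult:
  assumes "finite A" "finite B" "A \<inter> B = {}" "unrel A B"
  shows "rr (A \<union> B) = rr A * rr B"
  using assms
proof (induction "card A + card B" arbitrary: A B rule: less_induct)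
  case less
  show ?case
  proof (cases "A = {} \<or> B = {}")
    case True thus ?thesis by auto
  next
    case False
    hence nA: "A \<noteq> {}" and nB: "B \<noteq> {}" by auto
    let ?OA = "{x\<in>A. isouter A x}" and ?OB = "{x\<in>B. isouter B x}"
    have fU: "finite (A \<union> B)" "A \<union> B \<noteq> {}" using less.prems nA by auto
    have O: "{x\<in>A \<union> B. isouter (A \<union> B) x} = ?OA \<union> ?OB"
      using isouter_Un_A[OF less.prems(4)] isouter_Un_B[OF less.prems(4)] by blast
    have d: "?OA \<inter> ?OB = {}" using less.prems(3) by blast
    have cU: "card (A \<union> B) = card A + card B" using less.prems by (simp add: card_Un_disjoint)
    have "real (card (A \<union> B)) * rr (A \<union> B) = (\<Sum>x\<in>?OA \<union> ?OB. rr (A \<union> B - {x}))"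
      using rr_rec[OF fU] O by simp
    also have "\<dots> = (\<Sum>x\<in>?OA. rr (A \<union> B - {x})) + (\<Sum>x\<in>?OB. rr (A \<union> B - {x}))"
      using less.prems(1,2) d by (intro sum.union_disjoint) auto
    also have "(\<Sum>x\<in>?OA. rr (A \<union> B - {x})) = (\<Sum>x\<in>?OA. rr (A - {x}) * rr B)"
    proof (rule sum.cong[OF refl])
      fix x assume x: "x \<in> ?OA"
      have e: "A \<union> B - {x} = (A - {x}) \<union> B" using x less.prems(3) by blast
      have xA: "x \<in> A" using x by simp
      have "card (A - {x}) < card A" by (rule card_Diff1_less[OF less.prems(1) xA])
      hence "card (A - {x}) + card B < card A + card B" by simp
      moreover have "unrel (A - {x}) B" using less.prems(4) unfolding unrel_def by blast
      moreover have "finite (A - {x})" "(A - {x}) \<inter> B = {}" using less.prems(1,3) by auto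
      ultimately have "rr ((A - {x}) \<union> B) = rr (A - {x}) * rr B"
        using less.hyps[of "A - {x}" B] less.prems(2) by blast
      thus "rr (A \<union> B - {x}) = rr (A - {x}) * rr B" using e by simp
    qed
    also have "(\<Sum>x\<in>?OB. rr (A \<union> B - {x})) = (\<Sum>x\<in>?OB. rr A * rr (B - {x}))"
    proof (rule sum.cong[OF refl])
      fix x assume x: "x \<in> ?OB"
      have e: "A \<union> B - {x} = A \<union> (B - {x})" using x less.prems(3) by blast
      have xB: "x \<in> B" using x by simp
      have "card (B - {x}) < card B" by (rule card_Diff1_less[OF less.prems(2) xB])
      hence "card A + card (B - {x}) < card A + card B" by simp
      moreover have "unrel A (B - {x})" using less.prems(4) unfolding unrel_def by blast
      moreover have "finite (B - {x})" "A \<inter> (B - {x}) = {}" using less.prems(2,3) by auto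
      ultimately have "rr (A \<union> (B - {x})) = rr A * rr (B - {x})"
        using less.hyps[of A "B - {x}"] less.prems(1) by blast
      thus "rr (A \<union> B - {x}) = rr A * rr (B - {x})" using e by simp
    qed
    also have "(\<Sum>x\<in>?OA. rr (A - {x}) * rr B) = real (card A) * rr A * rr B"
      using rr_rec[OF less.prems(1) nA] by (simp add: sum_distrib_right)
    also have "(\<Sum>x\<in>?OB. rr A * rr (B - {x})) = rr A * (real (card B) * rr B)"
      using rr_rec[OF less.prems(2) nB] by (simp add: sum_distrib_left)
    finally have "real (card A + card B) * rr (A \<union> B) = real (card A + card B) * (rr A * rr B)"
      unfolding cU by (simp add: algebra_simps)
    moreover have "card A + card B > 0" using nA less.prems(1) by (simp add: card_gt_0_iff)
    ultimately show ?thesis by simp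
  qed
qed


definition gidx :: "nat set set \<Rightarrow> nat \<Rightarrow> nat" where
  "gidx L y = card {x \<in> \<Union>L. x < y}"

definition gb :: "nat set set \<Rightarrow> nat set \<Rightarrow> nat" where
  "gb L \<rho> = gidx L (Min \<rho>)"

definition grp :: "nat set set \<Rightarrow> nat set set \<Rightarrow> nat \<Rightarrow> nat set set" where
  "grp P L i = {\<rho> \<in> P - L. gb L \<rho> = i}"

lemma lowersetD: "L \<in> lowersets P \<Longrightarrow> \<tau> \<in> L \<Longrightarrow> \<sigma> \<in> P \<Longrightarrow> Conv \<sigma> \<inter> \<tau> \<noteq> {} \<Longrightarrow> \<sigma> \<in> L"
  unfolding lowersets_def by blast

lemma lowerset_sub: "L \<in> lowersets P \<Longrightarrow> L \<subseteq> P"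
  unfolding lowersets_def by blast

lemma gidx_mono: "finite (\<Union>L) \<Longrightarrow> y \<le> y' \<Longrightarrow> gidx L y \<le> gidx L y'"
  unfolding gidx_def by (rule card_mono) auto

lemma gidx_le: "finite (\<Union>L) \<Longrightarrow> gidx L y \<le> card (\<Union>L)"
  unfolding gidx_def by (rule card_mono) auto

lemma gidx_const:
  assumes P: "fdisj P" and L: "L \<in> lowersets P" and r: "\<rho> \<in> P" "\<rho> \<notin> L" and y: "y \<in> \<rho>"
  shows "gidx L y = gb L \<rho>"
proof -
  have fr: "finite \<rho>" "\<rho> \<noteq> {}" using P r(1) unfolding fdisj_def by auto
  let ?m = "Min \<rho>"
  have my: "?m \<le> y" using fr y by simp
  have yM: "y \<le> Max \<rho>" using fr y by simp
  have "{x \<in> \<Union>L. x < y} \<subseteq> {x \<in> \<Union>L. x < ?m}"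
  proof
    fix x assume x: "x \<in> {x \<in> \<Union>L. x < y}"
    then obtain \<tau> where t: "\<tau> \<in> L" "x \<in> \<tau>" and xy: "x < y" by blast
    have tP: "\<tau> \<in> P" using t(1) lowerset_sub[OF L] by blast
    have "\<tau> \<noteq> \<rho>" using t(1) r(2) by blast
    hence xm: "x \<noteq> ?m" using fdisj_same[OF P tP r(1) t(2)] Min_in[OF fr] by blast
    show "x \<in> {x \<in> \<Union>L. x < ?m}"
    proof (rule ccontr)
      assume "x \<notin> {x \<in> \<Union>L. x < ?m}"
      hence "?m < x" using x xm by auto
      hence "x \<in> Conv \<rho>" unfolding Conv_def using xy yM by auto
      hence "Conv \<rho> \<inter> \<tau> \<noteq> {}" using t(2) by blast
      hence "\<rho> \<in> L" using lowersetD[OF L t(1) r(1)] by blast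
      thus False using r(2) by blast
    qed
  qed
  moreover have "{x \<in> \<Union>L. x < ?m} \<subseteq> {x \<in> \<Union>L. x < y}" using my by auto
  ultimately have "{x \<in> \<Union>L. x < y} = {x \<in> \<Union>L. x < ?m}" by (rule subset_antisym)
  thus ?thesis unfolding gidx_def gb_def by simp
qed

lemma gap_inter:
  assumes P: "fdisj P" and L: "L \<in> lowersets P" and p: "\<pi> \<in> P"
  shows "\<pi> \<inter> gap P L i = (if \<pi> \<in> L then {} else if gb L \<pi> = i then \<pi> else {})"
proof (cases "\<pi> \<in> L")
  case True
  thus ?thesis unfolding gap_def by auto
next
  case False
  have notL: "y \<notin> \<Union>L" if "y \<in> \<pi>" for y
  proof
    assume "y \<in> \<Union>L"
    then obtain \<tau> where "\<tau> \<in> L" "y \<in> \<tau>" by blast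
    moreover hence "\<tau> \<in> P" using lowerset_sub[OF L] by blast
    ultimately have "\<tau> = \<pi>" using fdisj_same[OF P _ p _ that] by blast
    thus False using False \<open>\<tau> \<in> L\<close> by blast
  qed
  have g: "gidx L y = gb L \<pi>" if "y \<in> \<pi>" for y using gidx_const[OF P L p False that] .
  show ?thesis
  proof (cases "gb L \<pi> = i")
    case True
    have "\<pi> \<subseteq> gap P L i" unfolding gap_def using notL g True p by (auto simp: gidx_def)
    thus ?thesis using True False by auto
  next
    case F2: False
    have "\<pi> \<inter> gap P L i = {}" unfolding gap_def using g F2 by (auto simp: gidx_def)
    thus ?thesis using F2 False by auto
  qed
qed

lemma restr_gap:
  assumes P: "fdisj P" and L: "L \<in> lowersets P"
  shows "restr P (gap P L i) = grp P L i"
proof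
  show "restr P (gap P L i) \<subseteq> grp P L i"
  proof
    fix z assume "z \<in> restr P (gap P L i)"
    then obtain \<pi> where p: "\<pi> \<in> P" "z = \<pi> \<inter> gap P L i" and z: "z \<noteq> {}" unfolding restr_def by blast
    have e: "z = (if \<pi> \<in> L then {} else if gb L \<pi> = i then \<pi> else {})" using gap_inter[OF P L p(1)] p(2) by simp
    hence "\<pi> \<notin> L" "gb L \<pi> = i" "z = \<pi>" using z by (auto split: if_splits)
    thus "z \<in> grp P L i" unfolding grp_def using p(1) by blast
  qed
  show "grp P L i \<subseteq> restr P (gap P L i)"
  proof
    fix \<rho> assume "\<rho> \<in> grp P L i"
    hence r: "\<rho> \<in> P" "\<rho> \<notin> L" "gb L \<rho> = i" unfolding grp_def by auto
    have "\<rho> \<inter> gap P L i = \<rho>" using gap_inter[OF P L r(1)] r by simp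
    moreover have "\<rho> \<noteq> {}" using P r(1) unfolding fdisj_def by blast
    ultimately show "\<rho> \<in> restr P (gap P L i)" unfolding restr_def using r(1) by (metis DiffI image_eqI singletonD)
  qed
qed

lemma upper_alt:
  assumes P: "fdisj P" and L: "L \<in> lowersets P"
  shows "upper P L = filter (\<lambda>Q. Q \<noteq> {}) (map (\<lambda>i. std (grp P L i)) [0..<card (\<Union>L) + 1])"
  unfolding upper_def restr_gap[OF P L] ..

lemma grp_sub: "grp P L i \<subseteq> P" unfolding grp_def by blast

lemma grp_unrel_pair:
  assumes P: "fdisj P" and L: "L \<in> lowersets P" and r: "\<rho> \<in> grp P L i" and r': "\<rho>' \<in> grp P L j" and ij: "i \<noteq> j"
  shows "Conv \<rho> \<inter> \<rho>' = {}"
proof (rule ccontr)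
  assume "Conv \<rho> \<inter> \<rho>' \<noteq> {}"
  then obtain y where y: "y \<in> \<rho>'" "Min \<rho> \<le> y" "y \<le> Max \<rho>" unfolding Conv_def by auto
  have rr: "\<rho> \<in> P" "\<rho> \<notin> L" "gb L \<rho> = i" using r unfolding grp_def by auto
  have rr': "\<rho>' \<in> P" "\<rho>' \<notin> L" "gb L \<rho>' = j" using r' unfolding grp_def by auto
  have fL: "finite (\<Union>L)" using fdisj_finU[OF fdisj_subset[OF P lowerset_sub[OF L]]] .
  have fr: "finite \<rho>" "\<rho> \<noteq> {}" using P rr(1) unfolding fdisj_def by auto
  have "gidx L (Min \<rho>) \<le> gidx L y" by (rule gidx_mono[OF fL y(2)])
  moreover have "gidx L y \<le> gidx L (Max \<rho>)" by (rule gidx_mono[OF fL y(3)])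
  moreover have "gidx L (Max \<rho>) = i" using gidx_const[OF P L rr(1,2) Max_in[OF fr]] rr(3) by simp
  moreover have "gidx L (Min \<rho>) = i" using rr(3) unfolding gb_def by simp
  ultimately have "gidx L y = i" by simp
  moreover have "gidx L y = j" using gidx_const[OF P L rr'(1,2) y(1)] rr'(3) by simp
  ultimately show False using ij by simp
qed

lemma grp_unrel:
  assumes P: "fdisj P" and L: "L \<in> lowersets P" and ij: "i \<notin> I"
  shows "unrel (\<Union>j\<in>I. grp P L j) (grp P L i)"
  unfolding unrel_def
proof (intro ballI conjI)
  fix a b assume a: "a \<in> (\<Union>j\<in>I. grp P L j)" and b: "b \<in> grp P L i"
  then obtain j where j: "j \<in> I" "a \<in> grp P L j" by blast
  have "j \<noteq> i" using j ij by blast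
  show "Conv a \<inter> b = {}" by (rule grp_unrel_pair[OF P L j(2) b \<open>j \<noteq> i\<close>])
  show "Conv b \<inter> a = {}" using grp_unrel_pair[OF P L b j(2)] \<open>j \<noteq> i\<close> by simp
qed

lemma grp_disj: "i \<notin> I \<Longrightarrow> (\<Union>j\<in>I. grp P L j) \<inter> grp P L i = {}"
  unfolding grp_def by auto

lemma prod_filter_ne: "(\<phi> {} :: 'a::comm_monoid_mult) = 1 \<Longrightarrow> prod_list (map \<phi> (filter (\<lambda>Q. Q \<noteq> {}) xs)) = prod_list (map \<phi> xs)"
  by (induction xs) auto

lemma prod_upper:
  fixes \<phi> :: "nat set set \<Rightarrow> 'a::comm_monoid_mult"
  assumes P: "fdisj P" and L: "L \<in> lowersets P"
    and e: "\<phi> {} = 1" and s: "\<And>U. U \<subseteq> P \<Longrightarrow> \<phi> (std U) = \<phi> U"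
    and m: "\<And>A B. A \<subseteq> P \<Longrightarrow> B \<subseteq> P \<Longrightarrow> A \<inter> B = {} \<Longrightarrow> unrel A B \<Longrightarrow> \<phi> (A \<union> B) = \<phi> A * \<phi> B"
  shows "prod_list (map \<phi> (upper P L)) = \<phi> (P - L)"
proof -
  let ?c = "card (\<Union>L) + 1"
  have "prod_list (map \<phi> (upper P L)) = prod_list (map \<phi> (map (\<lambda>i. std (grp P L i)) [0..<?c]))"
    unfolding upper_alt[OF P L] by (rule prod_filter_ne[of \<phi>, OF e])
  also have "\<dots> = prod_list (map (\<lambda>i. \<phi> (grp P L i)) [0..<?c])"
    using s[OF grp_sub] by (simp add: comp_def)
  also have "\<dots> = (\<Prod>i\<in>{0..<?c}. \<phi> (grp P L i))"
    by (subst prod.distinct_set_conv_list[of "[0..<?c]" "\<lambda>i. \<phi> (grp P L i)", symmetric]) (simp_all add: mult.commute)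
  also have "\<dots> = \<phi> (\<Union>i\<in>{0..<?c}. grp P L i)"
  proof -
    have "(\<Prod>i\<in>{0..<n}. \<phi> (grp P L i)) = \<phi> (\<Union>i\<in>{0..<n}. grp P L i)" for n
    proof (induction n)
      case 0 thus ?case using e by simp
    next
      case (Suc n)
      have u: "(\<Union>i\<in>{0..<Suc n}. grp P L i) = (\<Union>i\<in>{0..<n}. grp P L i) \<union> grp P L n"
        by (auto simp: less_Suc_eq)
      have "\<phi> ((\<Union>i\<in>{0..<n}. grp P L i) \<union> grp P L n) = \<phi> (\<Union>i\<in>{0..<n}. grp P L i) * \<phi> (grp P L n)"
        by (rule m) (use grp_sub grp_disj[of n "{0..<n}"] grp_unrel[OF P L, of n "{0..<n}"] in auto)
      thus ?case using Suc u by simp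
    qed
    thus ?thesis .
  qed
  also have "(\<Union>i\<in>{0..<?c}. grp P L i) = P - L"
  proof
    show "(\<Union>i\<in>{0..<?c}. grp P L i) \<subseteq> P - L" unfolding grp_def by blast
    show "P - L \<subseteq> (\<Union>i\<in>{0..<?c}. grp P L i)"
    proof
      fix \<rho> assume r: "\<rho> \<in> P - L"
      have fL: "finite (\<Union>L)" using fdisj_finU[OF fdisj_subset[OF P lowerset_sub[OF L]]] .
      have "gb L \<rho> < ?c" unfolding gb_def using gidx_le[OF fL, of "Min \<rho>"] by linarith
      thus "\<rho> \<in> (\<Union>i\<in>{0..<?c}. grp P L i)" using r unfolding grp_def by auto
    qed
  qed
  finally show ?thesis .
qed


lemma upper_valid:
  assumes P: "fdisj P" "noncrossing P" and L: "L \<in> lowersets P" and Q: "Q \<in> set (upper P L)"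
  shows "ncp Q \<and> Q \<noteq> {} \<and> fdisj Q"
proof -
  have Q1: "Q \<in> set (map (\<lambda>i. std (grp P L i)) [0..<card (\<Union>L) + 1])" and ne: "Q \<noteq> {}"
    using Q unfolding upper_alt[OF P(1) L] by (simp_all del: upt_Suc)
  obtain i where Q': "Q = std (grp P L i)" using Q1 by (auto simp del: upt_Suc)
  have "fdisj (grp P L i)" by (rule fdisj_subset[OF P(1) grp_sub])
  moreover have "noncrossing (grp P L i)" by (rule noncrossing_subset[OF P(2) grp_sub])
  ultimately show ?thesis using ncp_std fdisj_std Q' ne by blast
qed

lemma pow_sum_list: "(2::nat) ^ sum_list (map card xs) = prod_list (map (\<lambda>Q. 2 ^ card Q) xs)"
  by (induction xs) (auto simp: power_add)

lemma card_upper: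
  assumes P: "fdisj P" and L: "L \<in> lowersets P"
  shows "sum_list (map card (upper P L)) = card (P - L)"
proof -
  have fP: "finite P" using P unfolding fdisj_def by blast
  have "prod_list (map (\<lambda>Q. (2::nat) ^ card Q) (upper P L)) = 2 ^ card (P - L)"
  proof (rule prod_upper[OF P L])
    show "(2::nat) ^ card {} = 1" by simp
    show "(2::nat) ^ card (std U) = 2 ^ card U" if "U \<subseteq> P" for U
      using card_std[OF fdisj_subset[OF P that]] by simp
    show "(2::nat) ^ card (A \<union> B) = 2 ^ card A * 2 ^ card B"
      if "A \<subseteq> P" "B \<subseteq> P" "A \<inter> B = {}" "unrel A B" for A B
    proof -
      have "finite A" "finite B" using finite_subset[OF that(1) fP] finite_subset[OF that(2) fP] by auto
      thus ?thesis using that(3) by (simp add: card_Un_disjoint power_add)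
    qed
  qed
  hence "(2::nat) ^ sum_list (map card (upper P L)) = 2 ^ card (P - L)" using pow_sum_list[of "upper P L"] by simp
  thus ?thesis by simp
qed

lemma rr_upper:
  assumes P: "fdisj P" and L: "L \<in> lowersets P"
  shows "prod_list (map rr (upper P L)) = rr (P - L)"
proof (rule prod_upper[OF P L])
  have fP: "finite P" using P unfolding fdisj_def by blast
  show "rr {} = 1" by simp
  show "rr (std U) = rr U" if "U \<subseteq> P" for U using rr_std[OF fdisj_subset[OF P that]] .
  show "rr (A \<union> B) = rr A * rr B" if "A \<subseteq> P" "B \<subseteq> P" "A \<inter> B = {}" "unrel A B" for A B
  proof -
    have "finite A" "finite B" using finite_subset[OF that(1) fP] finite_subset[OF that(2) fP] by auto
    thus ?thesis using rr_mult that(3,4) by blast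
  qed
qed

lemma ncp_nonc: "ncp P \<Longrightarrow> noncrossing P" unfolding ncp_def by blast

lemma upper_empty:
  assumes P: "ncp P" "P \<noteq> {}"
  shows "upper P {} = [P]"
proof -
  have fd: "fdisj P" using ncp_fdisj[OF P(1)] .
  have L: "{} \<in> lowersets P" unfolding lowersets_def by blast
  have g: "grp P {} 0 = P" unfolding grp_def gb_def gidx_def by simp
  show ?thesis unfolding upper_alt[OF fd L] using g ncp_std_id[OF P(1)] P(2) by simp
qed

lemma full_lowerset: "P \<in> lowersets P" unfolding lowersets_def by blast

lemma upper_full:
  assumes P: "fdisj P"
  shows "upper P P = []"
proof -
  have g: "grp P P i = {}" for i unfolding grp_def by simp
  show ?thesis unfolding upper_alt[OF P full_lowerset] g by (simp add: filter_map comp_def)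
qed

lemma lower_full: "ncp P \<Longrightarrow> P \<noteq> {} \<Longrightarrow> lower P P = [P]"
  unfolding lower_def using ncp_std_id by simp

lemma lower_empty[simp]: "lower P {} = []" unfolding lower_def by simp

lemma card_ge1_list: "(\<forall>Q\<in>set ys. fdisj Q \<and> Q \<noteq> {}) \<Longrightarrow> sum_list (map card ys) = 0 \<Longrightarrow> ys = []"
  by (cases ys) (auto simp: fdisj_def)

lemma upper_nil_iff:
  assumes P: "fdisj P" "noncrossing P" and L: "L \<in> lowersets P"
  shows "upper P L = [] \<longleftrightarrow> L = P"
proof
  assume u: "upper P L = []"
  have "card (P - L) = 0" using card_upper[OF P(1) L] u by simp
  moreover have "finite P" using P(1) unfolding fdisj_def by blast
  ultimately have "P - L = {}" by simp
  thus "L = P" using lowerset_sub[OF L] by blast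
next
  assume "L = P" thus "upper P L = []" using upper_full[OF P(1)] by simp
qed

lemma upper_single_iff:
  assumes P: "fdisj P" "noncrossing P" and L: "L \<in> lowersets P"
  shows "(\<exists>Q. upper P L = [Q] \<and> card Q = 1) \<longleftrightarrow> card (P - L) = 1"
proof -
  have v: "\<forall>Q\<in>set (upper P L). fdisj Q \<and> Q \<noteq> {}" using upper_valid[OF P L] by blast
  have c: "sum_list (map card (upper P L)) = card (P - L)" by (rule card_upper[OF P(1) L])
  show ?thesis
  proof
    assume "\<exists>Q. upper P L = [Q] \<and> card Q = 1"
    thus "card (P - L) = 1" using c by auto
  next
    assume c1: "card (P - L) = 1"
    show "\<exists>Q. upper P L = [Q] \<and> card Q = 1"
    proof (cases "upper P L")
      case Nil thus ?thesis using c c1 by simp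
    next
      case (Cons Q ys)
      have "card Q \<ge> 1" using v Cons by (auto simp: fdisj_def Suc_le_eq card_gt_0_iff)
      moreover have "card Q + sum_list (map card ys) = 1" using c c1 Cons by simp
      ultimately have "card Q = 1" "sum_list (map card ys) = 0" by linarith+
      moreover have "ys = []" using card_ge1_list[of ys] v Cons \<open>sum_list (map card ys) = 0\<close> by simp
      ultimately show ?thesis using Cons by simp
    qed
  qed
qed

lemma finite_lowersets: "finite P \<Longrightarrow> finite (lowersets P)"
  unfolding lowersets_def by (rule finite_subset[of _ "Pow P"]) auto

lemma single_lowerset: assumes p: "\<pi> \<in> P" shows "{\<pi>} \<in> lowersets P \<longleftrightarrow> isouter P \<pi>"
proof -
  have "{\<pi>} \<in> lowersets P \<longleftrightarrow> (\<forall>\<sigma>\<in>P. Conv \<sigma> \<inter> \<pi> \<noteq> {} \<longrightarrow> \<sigma> = \<pi>)"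
    unfolding lowersets_def using p by simp
  also have "\<dots> \<longleftrightarrow> isouter P \<pi>" unfolding isouter_def using p by blast
  finally show ?thesis .
qed

definition b1 :: "nat set set \<Rightarrow> nat set" where
  "b1 P = (THE \<pi>. \<pi> \<in> P \<and> 1 \<in> \<pi>)"

lemma ncp_n: assumes "ncp P" obtains n where "partition_on {1..n} P" "\<Union>P = {1..n}"
proof -
  obtain n where "partition_on {1..n} P" using assms unfolding ncp_def by blast
  moreover hence "\<Union>P = {1..n}" unfolding partition_on_def by simp
  ultimately show ?thesis using that by blast
qed

lemma one_in: assumes P: "ncp P" "P \<noteq> {}" shows "1 \<in> \<Union>P"
proof -
  obtain n where n: "partition_on {1..n} P" "\<Union>P = {1..n}" using ncp_n[OF P(1)] .
  have "{} \<notin> P" using n(1) unfolding partition_on_def by blast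
  moreover obtain \<pi> where "\<pi> \<in> P" using P(2) by blast
  ultimately obtain x where "x \<in> \<pi>" by (metis all_not_in_conv)
  hence "\<Union>P \<noteq> {}" using \<open>\<pi> \<in> P\<close> by blast
  hence "{1..n} \<noteq> {}" using n(2) by simp
  hence "1 \<le> n" by simp
  thus ?thesis using n(2) by simp
qed

lemma b1:
  assumes P: "ncp P" "P \<noteq> {}"
  shows "b1 P \<in> P" "1 \<in> b1 P" "\<And>\<pi>. \<pi> \<in> P \<Longrightarrow> 1 \<in> \<pi> \<Longrightarrow> \<pi> = b1 P"
proof -
  have fd: "fdisj P" using ncp_fdisj[OF P(1)] .
  obtain \<pi>0 where p0: "\<pi>0 \<in> P" "1 \<in> \<pi>0" using one_in[OF P] by blast
  have u: "\<pi> = \<pi>0" if "\<pi> \<in> P" "1 \<in> \<pi>" for \<pi> using fdisj_same[OF fd that(1) p0(1) that(2) p0(2)] .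
  have "b1 P = \<pi>0" unfolding b1_def
  proof (rule the_equality)
    show "\<pi>0 \<in> P \<and> 1 \<in> \<pi>0" using p0 by blast
    show "\<pi> = \<pi>0" if "\<pi> \<in> P \<and> 1 \<in> \<pi>" for \<pi> using u that by blast
  qed
  thus "b1 P \<in> P" "1 \<in> b1 P" using p0 by simp_all
  show "\<And>\<pi>. \<pi> \<in> P \<Longrightarrow> 1 \<in> \<pi> \<Longrightarrow> \<pi> = b1 P"
  proof -
    fix \<pi> assume "\<pi> \<in> P" "1 \<in> \<pi>"
    hence "\<pi> = \<pi>0" by (rule u)
    thus "\<pi> = b1 P" using \<open>b1 P = \<pi>0\<close> by simp
  qed
qed

lemma elems_ge1: "ncp P \<Longrightarrow> \<pi> \<in> P \<Longrightarrow> x \<in> \<pi> \<Longrightarrow> 1 \<le> x"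
proof -
  assume a: "ncp P" "\<pi> \<in> P" "x \<in> \<pi>"
  obtain n where "\<Union>P = {1..n}" using ncp_n[OF a(1)] by blast
  moreover have "x \<in> \<Union>P" using a by blast
  ultimately show "1 \<le> x" by simp
qed

lemma isouter_b1:
  assumes P: "ncp P" "P \<noteq> {}"
  shows "isouter P (b1 P)"
  unfolding isouter_def
proof (intro conjI ballI impI)
  show "b1 P \<in> P" using b1[OF P] by blast
  fix \<sigma> assume s: "\<sigma> \<in> P" "\<sigma> \<noteq> b1 P"
  show "Conv \<sigma> \<inter> b1 P = {}"
  proof (rule ccontr)
    assume "Conv \<sigma> \<inter> b1 P \<noteq> {}"
    then obtain b where b: "b \<in> b1 P" "Min \<sigma> \<le> b" "b \<le> Max \<sigma>" unfolding Conv_def by auto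
    have fd: "fdisj P" using ncp_fdisj[OF P(1)] .
    have fs: "finite \<sigma>" "\<sigma> \<noteq> {}" using fd s(1) unfolding fdisj_def by auto
    have bs: "b \<notin> \<sigma>" using fdisj_same[OF fd s(1) b1(1)[OF P] _ b(1)] s(2) by blast
    have "Min \<sigma> \<noteq> b" using Min_in[OF fs] bs by auto
    hence mb: "Min \<sigma> < b" using b(2) by simp
    have "Max \<sigma> \<noteq> b" using Max_in[OF fs] bs by auto
    hence bM: "b < Max \<sigma>" using b(3) by simp
    have "1 \<notin> \<sigma>" using b1(3)[OF P s(1)] s(2) by blast
    moreover have "1 \<le> Min \<sigma>" using elems_ge1[OF P(1) s(1) Min_in[OF fs]] .
    ultimately have "1 < Min \<sigma>" using Min_in[OF fs] by (metis le_neq_implies_less)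
    show False by (rule noncrossingD[OF ncp_nonc[OF P(1)] b1(1)[OF P] s(1) s(2)[symmetric] \<open>1 < Min \<sigma>\<close> mb bM b1(2)[OF P] b(1) Min_in[OF fs] Max_in[OF fs]])
  qed
qed

lemma one_in_L:
  assumes P: "ncp P" "P \<noteq> {}" and L: "L \<in> lowersets P"
  shows "1 \<in> \<Union>L \<longleftrightarrow> b1 P \<in> L"
proof
  assume "1 \<in> \<Union>L"
  then obtain \<tau> where "\<tau> \<in> L" "1 \<in> \<tau>" by blast
  moreover hence "\<tau> = b1 P" using b1(3)[OF P] lowerset_sub[OF L] by blast
  ultimately show "b1 P \<in> L" by simp
next
  assume "b1 P \<in> L" thus "1 \<in> \<Union>L" using b1(2)[OF P] by blast
qed

lemma prec_set:
  assumes P: "ncp P" "P \<noteq> {}"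
  shows "{L \<in> lowersets P. 1 \<in> \<Union>L \<and> card L = 1} = {{b1 P}}"
proof
  show "{{b1 P}} \<subseteq> {L \<in> lowersets P. 1 \<in> \<Union>L \<and> card L = 1}"
    using single_lowerset[OF b1(1)[OF P]] isouter_b1[OF P] b1(2)[OF P] by auto
  show "{L \<in> lowersets P. 1 \<in> \<Union>L \<and> card L = 1} \<subseteq> {{b1 P}}"
  proof
    fix L assume "L \<in> {L \<in> lowersets P. 1 \<in> \<Union>L \<and> card L = 1}"
    hence L: "L \<in> lowersets P" "1 \<in> \<Union>L" "card L = 1" by auto
    obtain \<pi> where "L = {\<pi>}" using L(3) card_1_singletonE by blast
    moreover have "b1 P \<in> L" using one_in_L[OF P L(1)] L(2) by blast
    ultimately show "L \<in> {{b1 P}}" by simp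
  qed
qed

lemma Min_b1: assumes P: "ncp P" "P \<noteq> {}" shows "Min (b1 P) = 1"
proof -
  have fd: "fdisj P" using ncp_fdisj[OF P(1)] .
  have f: "finite (b1 P)" using fd b1(1)[OF P] unfolding fdisj_def by blast
  show ?thesis
  proof (rule Min_eqI[OF f])
    show "1 \<in> b1 P" using b1(2)[OF P] .
    show "1 \<le> y" if "y \<in> b1 P" for y using elems_ge1[OF P(1) b1(1)[OF P] that] .
  qed
qed

lemma low_b1_iff:
  assumes P: "ncp P" "P \<noteq> {}"
  shows "P - {b1 P} \<in> lowersets P \<longleftrightarrow> Conv (b1 P) = b1 P"
proof
  let ?p = "b1 P"
  have fd: "fdisj P" using ncp_fdisj[OF P(1)] .
  have pP: "?p \<in> P" using b1(1)[OF P] .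
  have fp: "finite ?p" "?p \<noteq> {}" using fd pP unfolding fdisj_def by auto
  obtain n where n: "\<Union>P = {1..n}" using ncp_n[OF P(1)] by blast
  assume low: "P - {?p} \<in> lowersets P"
  show "Conv ?p = ?p"
  proof
    show "Conv ?p \<subseteq> ?p"
    proof
      fix z assume z: "z \<in> Conv ?p"
      have "Max ?p \<in> \<Union>P" using Max_in[OF fp] pP by blast
      hence "z \<in> \<Union>P" using z n unfolding Conv_def Min_b1[OF P] by auto
      then obtain \<sigma> where s: "\<sigma> \<in> P" "z \<in> \<sigma>" by blast
      show "z \<in> ?p"
      proof (rule ccontr)
        assume "z \<notin> ?p"
        hence "\<sigma> \<in> P - {?p}" using s by blast
        moreover have "Conv ?p \<inter> \<sigma> \<noteq> {}" using z s(2) by blast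
        ultimately have "?p \<in> P - {?p}" using lowersetD[OF low _ pP] by blast
        thus False by blast
      qed
    qed
    show "?p \<subseteq> Conv ?p" unfolding Conv_def using fp by auto
  qed
next
  let ?p = "b1 P"
  have fd: "fdisj P" using ncp_fdisj[OF P(1)] .
  have pP: "?p \<in> P" using b1(1)[OF P] .
  assume c: "Conv ?p = ?p"
  show "P - {?p} \<in> lowersets P" unfolding lowersets_def
  proof (intro CollectI conjI ballI impI)
    show "P - {?p} \<subseteq> P" by blast
    fix \<tau> \<sigma> assume t: "\<tau> \<in> P - {?p}" and s: "\<sigma> \<in> P" and cs: "Conv \<sigma> \<inter> \<tau> \<noteq> {}"
    show "\<sigma> \<in> P - {?p}"
    proof (rule ccontr)
      assume "\<sigma> \<notin> P - {?p}"
      hence "\<sigma> = ?p" using s by blast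
      hence "?p \<inter> \<tau> \<noteq> {}" using cs c by simp
      then obtain x where "x \<in> ?p" "x \<in> \<tau>" by blast
      hence "\<tau> = ?p" using fdisj_same[OF fd _ pP] t by blast
      thus False using t by blast
    qed
  qed
qed

lemma succ_set:
  assumes P: "ncp P" "P \<noteq> {}"
  shows "{L \<in> lowersets P. 1 \<notin> \<Union>L \<and> card (P - L) = 1} =
         (if Conv (b1 P) = b1 P then {P - {b1 P}} else {})"
proof -
  let ?p = "b1 P"
  have pP: "?p \<in> P" using b1(1)[OF P] .
  have fP: "finite P" using ncp_fdisj[OF P(1)] unfolding fdisj_def by blast
  have "{L \<in> lowersets P. 1 \<notin> \<Union>L \<and> card (P - L) = 1} = {L. L = P - {?p} \<and> L \<in> lowersets P}"
  proof (intro set_eqI iffI)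
    fix L assume "L \<in> {L \<in> lowersets P. 1 \<notin> \<Union>L \<and> card (P - L) = 1}"
    hence L: "L \<in> lowersets P" "1 \<notin> \<Union>L" "card (P - L) = 1" by auto
    have "?p \<notin> L" using one_in_L[OF P L(1)] L(2) by blast
    hence pin: "?p \<in> P - L" using pP by blast
    obtain q where "P - L = {q}" using L(3) card_1_singletonE by blast
    hence "P - L = {?p}" using pin by blast
    hence "L = P - {?p}" using lowerset_sub[OF L(1)] by blast
    thus "L \<in> {L. L = P - {?p} \<and> L \<in> lowersets P}" using L(1) by blast
  next
    fix L assume "L \<in> {L. L = P - {?p} \<and> L \<in> lowersets P}"
    hence L: "L = P - {?p}" "L \<in> lowersets P" by auto
    have "?p \<notin> L" using L(1) by blast
    hence "1 \<notin> \<Union>L" using one_in_L[OF P L(2)] by blast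
    moreover have "P - L = {?p}" using L(1) pP by blast
    ultimately show "L \<in> {L \<in> lowersets P. 1 \<notin> \<Union>L \<and> card (P - L) = 1}" using L(2) by simp
  qed
  thus ?thesis using low_b1_iff[OF P] by auto
qed


abbreviation LO :: "nat set set list \<Rightarrow> nat set set list \<Rightarrow> nat set set list" where
  "LO w Ls \<equiv> concat (map (\<lambda>(P, L). lower P L) (zip w Ls))"
abbreviation UP :: "nat set set list \<Rightarrow> nat set set list \<Rightarrow> nat set set list" where
  "UP w Ls \<equiv> concat (map (\<lambda>(P, L). upper P L) (zip w Ls))"

lemma set_Cons_image: "set_Cons A X = (\<lambda>(a, xs). a # xs) ` (A \<times> X)"
  unfolding set_Cons_def by auto

lemma inj_Cons_pair: "inj_on (\<lambda>(a, xs). a # xs) S"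
  by (rule inj_onI) auto

lemma sum_set_Cons:
  assumes "finite A" "finite X"
  shows "(\<Sum>z\<in>set_Cons A X. h z) = (\<Sum>a\<in>A. \<Sum>xs\<in>X. h (a # xs))"
proof -
  have "(\<Sum>z\<in>set_Cons A X. h z) = (\<Sum>p\<in>A \<times> X. h ((\<lambda>(a, xs). a # xs) p))"
    unfolding set_Cons_image by (rule sum.reindex[OF inj_Cons_pair, unfolded comp_def])
  also have "\<dots> = (\<Sum>a\<in>A. \<Sum>xs\<in>X. h (a # xs))"
    unfolding sum.cartesian_product by (rule sum.cong) (auto simp: split_def)
  finally show ?thesis .
qed

lemma set_Cons_filter: "{Ls \<in> set_Cons A X. c (hd Ls)} = set_Cons {a \<in> A. c a} X"
  unfolding set_Cons_def by auto

lemma valid_Cons: "valid_word (P # ws) \<longleftrightarrow> ncp P \<and> P \<noteq> {} \<and> valid_word ws"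
  unfolding valid_word_def by auto

lemma finite_listset: "valid_word ws \<Longrightarrow> finite (listset (map lowersets ws))"
proof (induction ws)
  case Nil thus ?case by simp
next
  case (Cons P ws)
  have "finite P" using Cons.prems ncp_fdisj unfolding valid_word_def fdisj_def by auto
  hence "finite (lowersets P)" by (rule finite_lowersets)
  moreover have "finite (listset (map lowersets ws))" using Cons valid_Cons by blast
  ultimately show ?case unfolding set_Cons_image listset.simps list.map by (intro finite_imageI finite_cartesian_product)
qed

lemma listset_Cons_iff: "Ls \<in> listset (A # As) \<longleftrightarrow> (\<exists>a as. Ls = a # as \<and> a \<in> A \<and> as \<in> listset As)"
  unfolding listset.simps set_Cons_def by blast

lemma rep_in: "replicate (length ws) {} \<in> listset (map lowersets ws)"
proof (induction ws)
  case Nil thus ?case by simp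
next
  case (Cons P ws)
  have "{} \<in> lowersets P" unfolding lowersets_def by blast
  thus ?case using Cons by (simp add: set_Cons_def)
qed

lemma self_in: "ws \<in> listset (map lowersets ws)"
proof (induction ws)
  case Nil thus ?case by simp
next
  case (Cons P ws)
  thus ?case using full_lowerset by (simp add: set_Cons_def)
qed

lemma LO_nil_iff: "Ls \<in> listset (map lowersets ws) \<Longrightarrow> LO ws Ls = [] \<longleftrightarrow> Ls = replicate (length ws) {}"
proof (induction ws arbitrary: Ls)
  case Nil thus ?case by simp
next
  case (Cons P ws)
  obtain L Ls' where L: "Ls = L # Ls'" "L \<in> lowersets P" "Ls' \<in> listset (map lowersets ws)"
    using Cons.prems by (auto simp: set_Cons_def)
  have "LO (P # ws) Ls = lower P L @ LO ws Ls'" using L by simp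
  moreover have "lower P L = [] \<longleftrightarrow> L = {}" unfolding lower_def by simp
  ultimately show ?case using Cons.IH[OF L(3)] L(1) by simp
qed

lemma UP_rep: "valid_word ws \<Longrightarrow> UP ws (replicate (length ws) {}) = ws"
proof (induction ws)
  case Nil thus ?case by simp
next
  case (Cons P ws)
  hence "ncp P" "P \<noteq> {}" "valid_word ws" using valid_Cons by auto
  thus ?case using Cons.IH upper_empty by simp
qed

lemma UP_nil_iff: "valid_word ws \<Longrightarrow> Ls \<in> listset (map lowersets ws) \<Longrightarrow> UP ws Ls = [] \<longleftrightarrow> Ls = ws"
proof (induction ws arbitrary: Ls)
  case Nil thus ?case by simp
next
  case (Cons P ws)
  obtain L Ls' where L: "Ls = L # Ls'" "L \<in> lowersets P" "Ls' \<in> listset (map lowersets ws)"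
    using Cons.prems by (auto simp: set_Cons_def)
  have v: "ncp P" "P \<noteq> {}" "valid_word ws" using Cons.prems(1) valid_Cons by auto
  have "UP (P # ws) Ls = upper P L @ UP ws Ls'" using L by simp
  moreover have "upper P L = [] \<longleftrightarrow> L = P"
    by (rule upper_nil_iff[OF ncp_fdisj[OF v(1)] ncp_nonc[OF v(1)] L(2)])
  ultimately show ?case using Cons.IH[OF v(3) L(3)] L(1) by simp
qed

lemma LO_self: "valid_word ws \<Longrightarrow> LO ws ws = ws"
proof (induction ws)
  case Nil thus ?case by simp
next
  case (Cons P ws)
  hence "ncp P" "P \<noteq> {}" "valid_word ws" using valid_Cons by auto
  thus ?case using Cons.IH lower_full by simp
qed

lemma echar_left: "echar ([Q] @ r) = (if r = [] \<and> card Q = 1 then 1 else 0)"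
  unfolding echar_def by auto

lemma echar_right: "xs \<noteq> [] \<Longrightarrow> echar (xs @ r) = (if r = [] \<and> (\<exists>Q. xs = [Q] \<and> card Q = 1) then 1 else 0)"
  unfolding echar_def by (cases xs) auto

lemma inner_left:
  assumes ws: "valid_word ws" and L: "L \<noteq> {}" "fdisj L"
  shows "(\<Sum>Ls\<in>listset (map lowersets ws). echar (lower P L @ LO ws Ls) * h (UP ws Ls)) =
         (if card L = 1 then h ws else 0)"
proof -
  let ?X = "listset (map lowersets ws)" and ?r = "replicate (length ws) {}"
  have "(\<Sum>Ls\<in>?X. echar (lower P L @ LO ws Ls) * h (UP ws Ls)) =
        (\<Sum>Ls\<in>?X. if Ls = ?r then (if card L = 1 then h ws else 0) else 0)"
  proof (rule sum.cong[OF refl])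
    fix Ls assume Ls: "Ls \<in> ?X"
    have "lower P L = [std L]" unfolding lower_def using L by simp
    hence "echar (lower P L @ LO ws Ls) = (if Ls = ?r \<and> card L = 1 then 1 else 0)"
      using echar_left[of "std L"] LO_nil_iff[OF Ls] card_std[OF L(2)] by simp
    thus "echar (lower P L @ LO ws Ls) * h (UP ws Ls) = (if Ls = ?r then (if card L = 1 then h ws else 0) else 0)"
      using UP_rep[OF ws] by simp
  qed
  also have "\<dots> = (if card L = 1 then h ws else 0)"
    using finite_listset[OF ws] rep_in[of ws] by (simp add: sum.delta)
  finally show ?thesis .
qed

lemma inner_right:
  assumes ws: "valid_word ws" and u: "upper P L \<noteq> []"
  shows "(\<Sum>Ls\<in>listset (map lowersets ws). h (LO ws Ls) * echar (upper P L @ UP ws Ls)) =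
         (if \<exists>Q. upper P L = [Q] \<and> card Q = 1 then h ws else 0)"
proof -
  let ?X = "listset (map lowersets ws)"
  have "(\<Sum>Ls\<in>?X. h (LO ws Ls) * echar (upper P L @ UP ws Ls)) =
        (\<Sum>Ls\<in>?X. if Ls = ws then (if \<exists>Q. upper P L = [Q] \<and> card Q = 1 then h ws else 0) else 0)"
  proof (rule sum.cong[OF refl])
    fix Ls assume Ls: "Ls \<in> ?X"
    have "echar (upper P L @ UP ws Ls) = (if Ls = ws \<and> (\<exists>Q. upper P L = [Q] \<and> card Q = 1) then 1 else 0)"
      using echar_right[OF u] UP_nil_iff[OF ws Ls] by simp
    thus "h (LO ws Ls) * echar (upper P L @ UP ws Ls) = (if Ls = ws then (if \<exists>Q. upper P L = [Q] \<and> card Q = 1 then h ws else 0) else 0)"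
      using LO_self[OF ws] by (cases "Ls = ws"; cases "\<exists>Q. upper P L = [Q] \<and> card Q = 1") auto
  qed
  also have "\<dots> = (if \<exists>Q. upper P L = [Q] \<and> card Q = 1 then h ws else 0)"
    using finite_listset[OF ws] self_in[of ws] by (simp add: sum.delta)
  finally show ?thesis .
qed

lemma listset_Cons_sum:
  assumes v: "valid_word (P # ws)"
  shows "(\<Sum>Ls\<in>{Ls \<in> listset (map lowersets (P # ws)). c (hd Ls)}. f (LO (P # ws) Ls) * g (UP (P # ws) Ls)) =
         (\<Sum>L\<in>{L \<in> lowersets P. c L}. \<Sum>Ls\<in>listset (map lowersets ws).
            f (lower P L @ LO ws Ls) * g (upper P L @ UP ws Ls))"
proof -
  have vv: "ncp P" "P \<noteq> {}" "valid_word ws" using v valid_Cons by auto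
  have fP: "finite P" using ncp_fdisj[OF vv(1)] unfolding fdisj_def by blast
  have e: "{Ls \<in> listset (map lowersets (P # ws)). c (hd Ls)} = set_Cons {L \<in> lowersets P. c L} (listset (map lowersets ws))"
    using set_Cons_filter by simp
  have fin: "finite {L \<in> lowersets P. c L}" using finite_lowersets[OF fP] by simp
  show ?thesis unfolding e sum_set_Cons[OF fin finite_listset[OF vv(3)]] by simp
qed


lemma conv_alt: "conv f g w = (\<Sum>Ls\<in>{Ls \<in> listset (map lowersets w). True}. f (LO w Ls) * g (UP w Ls))"
  unfolding conv_def by simp

lemma conv_Nil: "conv echar g [] = 0"
  unfolding conv_def by (simp add: echar_def)

lemma lowerset_fdisj: "ncp P \<Longrightarrow> L \<in> lowersets P \<Longrightarrow> fdisj L"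
  using fdisj_subset[OF ncp_fdisj lowerset_sub] by blast

lemma conv_Cons:
  assumes v: "valid_word (P # ws)"
  shows "conv echar g (P # ws) = (\<Sum>\<pi>\<in>{\<pi>\<in>P. isouter P \<pi>}. g (upper P {\<pi>} @ ws)) + conv echar (\<lambda>v. g (P # v)) ws"
proof -
  have vv: "ncp P" "P \<noteq> {}" "valid_word ws" using v valid_Cons by auto
  have fP: "finite P" using ncp_fdisj[OF vv(1)] unfolding fdisj_def by blast
  have fL: "finite (lowersets P)" by (rule finite_lowersets[OF fP])
  let ?I = "\<lambda>L. \<Sum>Ls\<in>listset (map lowersets ws). echar (lower P L @ LO ws Ls) * g (upper P L @ UP ws Ls)"
  have "conv echar g (P # ws) = (\<Sum>L\<in>{L \<in> lowersets P. True}. ?I L)"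
    unfolding conv_alt by (rule listset_Cons_sum[OF v])
  also have "\<dots> = ?I {} + (\<Sum>L\<in>lowersets P - {{}}. ?I L)"
    using sum.remove[OF fL, of "{}" ?I] by (simp add: lowersets_def)
  also have "?I {} = conv echar (\<lambda>v. g (P # v)) ws"
    unfolding conv_def using upper_empty[OF vv(1,2)] by simp
  also have "(\<Sum>L\<in>lowersets P - {{}}. ?I L) = (\<Sum>L\<in>lowersets P - {{}}. if card L = 1 then g (upper P L @ ws) else 0)"
  proof (rule sum.cong[OF refl])
    fix L assume L: "L \<in> lowersets P - {{}}"
    show "?I L = (if card L = 1 then g (upper P L @ ws) else 0)"
      using inner_left[OF vv(3), of L P "\<lambda>u. g (upper P L @ u)"] L lowerset_fdisj[OF vv(1)] by blast
  qed
  also have "\<dots> = (\<Sum>L\<in>{L \<in> lowersets P - {{}}. card L = 1}. g (upper P L @ ws))"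
    by (rule sum.inter_filter[symmetric]) (simp add: fL)
  also have "{L \<in> lowersets P - {{}}. card L = 1} = (\<lambda>\<pi>. {\<pi>}) ` {\<pi>\<in>P. isouter P \<pi>}"
  proof
    show "{L \<in> lowersets P - {{}}. card L = 1} \<subseteq> (\<lambda>\<pi>. {\<pi>}) ` {\<pi>\<in>P. isouter P \<pi>}"
    proof
      fix L assume L: "L \<in> {L \<in> lowersets P - {{}}. card L = 1}"
      then obtain \<pi> where p: "L = {\<pi>}" using card_1_singletonE by blast
      have "\<pi> \<in> P" using L p lowerset_sub by blast
      moreover hence "isouter P \<pi>" using single_lowerset L p by blast
      ultimately show "L \<in> (\<lambda>\<pi>. {\<pi>}) ` {\<pi>\<in>P. isouter P \<pi>}" using p by blast
    qed
    show "(\<lambda>\<pi>. {\<pi>}) ` {\<pi>\<in>P. isouter P \<pi>} \<subseteq> {L \<in> lowersets P - {{}}. card L = 1}"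
      using single_lowerset by auto
  qed
  also have "(\<Sum>L\<in>(\<lambda>\<pi>. {\<pi>}) ` {\<pi>\<in>P. isouter P \<pi>}. g (upper P L @ ws)) = (\<Sum>\<pi>\<in>{\<pi>\<in>P. isouter P \<pi>}. g (upper P {\<pi>} @ ws))"
    by (rule sum.reindex[unfolded comp_def]) (auto intro: inj_onI)
  finally show ?thesis by simp
qed

lemma dprec_Cons:
  assumes v: "valid_word (P # ws)"
  shows "dprec echar \<psi> (P # ws) = \<psi> (upper P {b1 P} @ ws)"
proof -
  have vv: "ncp P" "P \<noteq> {}" "valid_word ws" using v valid_Cons by auto
  have fP: "finite P" using ncp_fdisj[OF vv(1)] unfolding fdisj_def by blast
  have fL: "finite (lowersets P)" by (rule finite_lowersets[OF fP])
  let ?I = "\<lambda>L. \<Sum>Ls\<in>listset (map lowersets ws). echar (lower P L @ LO ws Ls) * \<psi> (upper P L @ UP ws Ls)"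
  have "dprec echar \<psi> (P # ws) = (\<Sum>L\<in>{L \<in> lowersets P. 1 \<in> \<Union>L}. ?I L)"
    unfolding dprec_def using listset_Cons_sum[OF v, where c="\<lambda>L. 1 \<in> \<Union>L"] by simp
  also have "\<dots> = (\<Sum>L\<in>{L \<in> lowersets P. 1 \<in> \<Union>L}. if card L = 1 then \<psi> (upper P L @ ws) else 0)"
  proof (rule sum.cong[OF refl])
    fix L assume L: "L \<in> {L \<in> lowersets P. 1 \<in> \<Union>L}"
    hence "L \<noteq> {}" by auto
    thus "?I L = (if card L = 1 then \<psi> (upper P L @ ws) else 0)"
      using inner_left[OF vv(3), of L P "\<lambda>u. \<psi> (upper P L @ u)"] L lowerset_fdisj[OF vv(1)] by blast
  qed
  also have "\<dots> = (\<Sum>L\<in>{L \<in> {L \<in> lowersets P. 1 \<in> \<Union>L}. card L = 1}. \<psi> (upper P L @ ws))"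
    by (rule sum.inter_filter[symmetric]) (simp add: fL)
  also have "{L \<in> {L \<in> lowersets P. 1 \<in> \<Union>L}. card L = 1} = {{b1 P}}"
    using prec_set[OF vv(1,2)] by auto
  finally show ?thesis by simp
qed

lemma dsucc_Cons:
  assumes v: "valid_word (P # ws)"
  shows "dsucc \<psi> echar (P # ws) = (if Conv (b1 P) = b1 P then \<psi> (lower P (P - {b1 P}) @ ws) else 0)"
proof -
  have vv: "ncp P" "P \<noteq> {}" "valid_word ws" using v valid_Cons by auto
  have fd: "fdisj P" "noncrossing P" using ncp_fdisj[OF vv(1)] ncp_nonc[OF vv(1)] by auto
  have fP: "finite P" using fd unfolding fdisj_def by blast
  have fL: "finite (lowersets P)" by (rule finite_lowersets[OF fP])
  let ?I = "\<lambda>L. \<Sum>Ls\<in>listset (map lowersets ws). \<psi> (lower P L @ LO ws Ls) * echar (upper P L @ UP ws Ls)"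
  have "dsucc \<psi> echar (P # ws) = (\<Sum>L\<in>{L \<in> lowersets P. 1 \<notin> \<Union>L}. ?I L)"
    unfolding dsucc_def using listset_Cons_sum[OF v, where c="\<lambda>L. 1 \<notin> \<Union>L"] by simp
  also have "\<dots> = (\<Sum>L\<in>{L \<in> lowersets P. 1 \<notin> \<Union>L}. if card (P - L) = 1 then \<psi> (lower P L @ ws) else 0)"
  proof (rule sum.cong[OF refl])
    fix L assume L: "L \<in> {L \<in> lowersets P. 1 \<notin> \<Union>L}"
    hence L1: "L \<in> lowersets P" "1 \<notin> \<Union>L" by auto
    have "L \<noteq> P" using L1(2) one_in[OF vv(1,2)] by blast
    hence "upper P L \<noteq> []" using upper_nil_iff[OF fd L1(1)] by blast
    thus "?I L = (if card (P - L) = 1 then \<psi> (lower P L @ ws) else 0)"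
      using inner_right[OF vv(3), of P L "\<lambda>u. \<psi> (lower P L @ u)"] upper_single_iff[OF fd L1(1)] by simp
  qed
  also have "\<dots> = (\<Sum>L\<in>{L \<in> {L \<in> lowersets P. 1 \<notin> \<Union>L}. card (P - L) = 1}. \<psi> (lower P L @ ws))"
    by (rule sum.inter_filter[symmetric]) (simp add: fL)
  also have "{L \<in> {L \<in> lowersets P. 1 \<notin> \<Union>L}. card (P - L) = 1} = (if Conv (b1 P) = b1 P then {P - {b1 P}} else {})"
    using succ_set[OF vv(1,2)] by auto
  finally show ?thesis by simp
qed


definition nb :: "nat set set list \<Rightarrow> nat" where
  "nb w = sum_list (map card w)"

lemma nb_simps[simp]: "nb [] = 0" "nb (P # w) = card P + nb w" "nb (u @ v) = nb u + nb v"
  unfolding nb_def by simp_all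

lemma valid_append: "valid_word (u @ v) \<longleftrightarrow> valid_word u \<and> valid_word v"
  unfolding valid_word_def by auto

lemma valid_upper:
  assumes "ncp P" "L \<in> lowersets P" shows "valid_word (upper P L)"
  using upper_valid[OF ncp_fdisj[OF assms(1)] ncp_nonc[OF assms(1)] assms(2)] unfolding valid_word_def by blast

lemma nb_upper:
  assumes "ncp P" "L \<in> lowersets P" shows "nb (upper P L) = card (P - L)"
  unfolding nb_def by (rule card_upper[OF ncp_fdisj[OF assms(1)] assms(2)])

lemma b1_low: assumes "ncp P" "P \<noteq> {}" shows "{b1 P} \<in> lowersets P"
  using single_lowerset[OF b1(1)[OF assms]] isouter_b1[OF assms] by blast

lemma card_pos: "ncp P \<Longrightarrow> P \<noteq> {} \<Longrightarrow> card P \<ge> 1"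
  using ncp_fdisj unfolding fdisj_def by (simp add: Suc_le_eq card_gt_0_iff)

lemma prec_unique:
  assumes pe: "prec_eq \<psi>"
  shows "valid_word w \<Longrightarrow> \<psi> w = 1"
proof (induction "nb w" arbitrary: w rule: less_induct)
  case less
  show ?case
  proof (cases w)
    case Nil
    thus ?thesis using pe less.prems unfolding prec_eq_def eps_def dprec_def by simp
  next
    case (Cons P ws)
    have vv: "ncp P" "P \<noteq> {}" "valid_word ws" using less.prems Cons valid_Cons by auto
    have "\<psi> w = \<psi> (upper P {b1 P} @ ws)"
      using pe less.prems dprec_Cons[of P ws \<psi>] Cons unfolding prec_eq_def eps_def by simp
    also have "\<dots> = 1"
    proof (rule less.hyps)
      have L: "{b1 P} \<in> lowersets P" by (rule b1_low[OF vv(1,2)])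
      show "valid_word (upper P {b1 P} @ ws)" using valid_upper[OF vv(1) L] vv(3) valid_append by blast
      have "nb (upper P {b1 P}) = card P - 1" using nb_upper[OF vv(1) L] b1(1)[OF vv(1,2)] by simp
      thus "nb (upper P {b1 P} @ ws) < nb w" using Cons card_pos[OF vv(1,2)] by simp
    qed
    finally show ?thesis .
  qed
qed

lemma prec_exists: "prec_eq (\<lambda>_. 1)"
  unfolding prec_eq_def
proof (intro allI impI)
  fix w :: "nat set set list" assume v: "valid_word w"
  show "1 = eps w + dprec echar (\<lambda>_. 1) w"
  proof (cases w)
    case Nil thus ?thesis unfolding eps_def dprec_def by simp
  next
    case (Cons P ws) thus ?thesis using dprec_Cons[of P ws "\<lambda>_. 1"] v unfolding eps_def by simp
  qed
qed

lemma std_Conv_iff: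
  assumes Q: "fdisj Q" and p: "\<pi> \<in> Q"
  shows "Conv (rank (\<Union>Q) ` \<pi>) = rank (\<Union>Q) ` \<pi> \<longleftrightarrow> Conv \<pi> \<inter> \<Union>Q \<subseteq> \<pi>"
proof -
  let ?f = "rank (\<Union>Q)" and ?S = "\<Union>Q"
  have fS: "finite ?S" by (rule fdisj_finU[OF Q])
  have sm: "smono ?S ?f" by (rule smono_rank[OF fS])
  have pS: "\<pi> \<subseteq> ?S" using p by blast
  have fp: "finite \<pi>" "\<pi> \<noteq> {}" using Q p unfolding fdisj_def by auto
  have mi: "Min \<pi> \<in> \<pi>" "Max \<pi> \<in> \<pi>" using fp by auto
  have C: "Conv (?f ` \<pi>) = {?f (Min \<pi>)..?f (Max \<pi>)}"
    unfolding Conv_def smono_Min[OF sm pS fp] smono_Max[OF sm pS fp] ..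
  have sub: "?f ` \<pi> \<subseteq> Conv (?f ` \<pi>)"
  proof
    fix z assume "z \<in> ?f ` \<pi>"
    then obtain x where x: "x \<in> \<pi>" "z = ?f x" by blast
    have xS: "x \<in> ?S" "Min \<pi> \<in> ?S" "Max \<pi> \<in> ?S" using x(1) mi pS by auto
    have "Min \<pi> \<le> x" "x \<le> Max \<pi>" using x(1) fp by auto
    hence "?f (Min \<pi>) \<le> ?f x" "?f x \<le> ?f (Max \<pi>)"
      using smono_le_iff[OF sm xS(2) xS(1)] smono_le_iff[OF sm xS(1) xS(3)] by auto
    thus "z \<in> Conv (?f ` \<pi>)" unfolding C using x(2) by simp
  qed
  show ?thesis
  proof
    assume e: "Conv (?f ` \<pi>) = ?f ` \<pi>"
    show "Conv \<pi> \<inter> ?S \<subseteq> \<pi>"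
    proof
      fix s assume s: "s \<in> Conv \<pi> \<inter> ?S"
      hence "Min \<pi> \<le> s" "s \<le> Max \<pi>" "s \<in> ?S" unfolding Conv_def by auto
      moreover have mS: "Min \<pi> \<in> ?S" "Max \<pi> \<in> ?S" using mi pS by auto
      ultimately have "?f (Min \<pi>) \<le> ?f s" "?f s \<le> ?f (Max \<pi>)"
        using smono_le_iff[OF sm mS(1), of s] smono_le_iff[OF sm _ mS(2), of s] by auto
      hence "?f s \<in> ?f ` \<pi>" using e C by auto
      then obtain t where t: "t \<in> \<pi>" "?f s = ?f t" by auto
      hence "s = t" using smono_inj[OF sm] \<open>s \<in> ?S\<close> pS unfolding inj_on_def by blast
      thus "s \<in> \<pi>" using t by simp
    qed
  next
    assume H: "Conv \<pi> \<inter> ?S \<subseteq> \<pi>"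
    have "Conv (?f ` \<pi>) \<subseteq> ?f ` \<pi>"
    proof
      fix z assume z: "z \<in> Conv (?f ` \<pi>)"
      have r: "?f ` ?S = {1..card ?S}" by (rule rank_image[OF fS])
      have "?f (Max \<pi>) \<in> {1..card ?S}" using r mi pS by blast
      moreover have "?f (Min \<pi>) \<in> {1..card ?S}" using r mi pS by blast
      ultimately have "z \<in> {1..card ?S}" using z C by auto
      then obtain s where s: "s \<in> ?S" "z = ?f s" using r by (metis imageE)
      have "?f (Min \<pi>) \<le> ?f s" "?f s \<le> ?f (Max \<pi>)" using z C s by auto
      moreover have mS: "Min \<pi> \<in> ?S" "Max \<pi> \<in> ?S" using mi pS by auto
      ultimately have "Min \<pi> \<le> s" "s \<le> Max \<pi>"
        using smono_le_iff[OF sm mS(1) s(1)] smono_le_iff[OF sm s(1) mS(2)] by auto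
      hence "s \<in> Conv \<pi> \<inter> ?S" unfolding Conv_def using s(1) by auto
      hence "s \<in> \<pi>" using H by blast
      thus "z \<in> ?f ` \<pi>" using s by blast
    qed
    thus "Conv (?f ` \<pi>) = ?f ` \<pi>" using sub by blast
  qed
qed

lemma sub_Conv: "finite \<pi> \<Longrightarrow> \<pi> \<subseteq> Conv \<pi>"
  unfolding Conv_def by auto

lemma Conv_in_rest:
  assumes P: "ncp P" "P \<noteq> {}" and c: "Conv (b1 P) = b1 P" and p: "\<pi> \<in> P - {b1 P}"
  shows "Conv \<pi> \<subseteq> \<Union>(P - {b1 P})"
proof
  let ?b = "b1 P"
  fix z assume z: "z \<in> Conv \<pi>"
  have fd: "fdisj P" by (rule ncp_fdisj[OF P(1)])
  have pP: "\<pi> \<in> P" "\<pi> \<noteq> ?b" using p by auto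
  have fp: "finite \<pi>" "\<pi> \<noteq> {}" using fd pP unfolding fdisj_def by auto
  have bP: "?b \<in> P" by (rule b1(1)[OF P])
  have fb: "finite ?b" "?b \<noteq> {}" using fd bP unfolding fdisj_def by auto
  obtain n where n: "\<Union>P = {1..n}" using ncp_n[OF P(1)] by blast
  have "Min \<pi> \<in> \<Union>P" "Max \<pi> \<in> \<Union>P" using Min_in[OF fp] Max_in[OF fp] pP(1) by blast+
  hence "z \<in> \<Union>P" using z n unfolding Conv_def by auto
  then obtain \<sigma> where s: "\<sigma> \<in> P" "z \<in> \<sigma>" by blast
  show "z \<in> \<Union>(P - {?b})"
  proof (cases "\<sigma> = ?b")
    case False thus ?thesis using s by blast
  next
    case True
    have bconv: "?b = {1..Max ?b}" using c unfolding Conv_def Min_b1[OF P] by simp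
    have "z \<le> Max ?b" using s True fb by simp
    moreover have "Min \<pi> \<le> z" using z unfolding Conv_def by simp
    moreover have "Min \<pi> \<notin> ?b" using fdisj_same[OF fd pP(1) bP Min_in[OF fp]] pP(2) by blast
    moreover have "1 \<le> Min \<pi>" using elems_ge1[OF P(1) pP(1) Min_in[OF fp]] .
    ultimately have False using bconv by auto
    thus ?thesis ..
  qed
qed

lemma boolean_std_rest:
  assumes P: "ncp P" "P \<noteq> {}" and c: "Conv (b1 P) = b1 P"
  shows "boolean_ncp (std (P - {b1 P})) \<longleftrightarrow> boolean_ncp P"
proof -
  let ?Q = "P - {b1 P}"
  have fd: "fdisj P" by (rule ncp_fdisj[OF P(1)])
  have fQ: "fdisj ?Q" using fdisj_subset[OF fd] by blast
  have "boolean_ncp (std ?Q) \<longleftrightarrow> (\<forall>\<pi>\<in>?Q. Conv (rank (\<Union>?Q) ` \<pi>) = rank (\<Union>?Q) ` \<pi>)"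
    unfolding boolean_ncp_def std_alt by blast
  also have "\<dots> \<longleftrightarrow> (\<forall>\<pi>\<in>?Q. Conv \<pi> = \<pi>)"
  proof (intro ball_cong[OF refl])
    fix \<pi> assume p: "\<pi> \<in> ?Q"
    have fp: "finite \<pi>" using fQ p unfolding fdisj_def by blast
    have "Conv \<pi> \<inter> \<Union>?Q = Conv \<pi>" using Conv_in_rest[OF P c p] by blast
    thus "Conv (rank (\<Union>?Q) ` \<pi>) = rank (\<Union>?Q) ` \<pi> \<longleftrightarrow> Conv \<pi> = \<pi>"
      using std_Conv_iff[OF fQ p] sub_Conv[OF fp] by auto
  qed
  also have "\<dots> \<longleftrightarrow> boolean_ncp P" unfolding boolean_ncp_def using c by blast
  finally show ?thesis .
qed

definition bw :: "nat set set list \<Rightarrow> real" where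
  "bw w = (if \<forall>P\<in>set w. boolean_ncp P then 1 else 0)"

lemma bw_step:
  assumes v: "valid_word (P # ws)"
  shows "(if Conv (b1 P) = b1 P then bw (lower P (P - {b1 P}) @ ws) else 0) = bw (P # ws)"
proof -
  have vv: "ncp P" "P \<noteq> {}" "valid_word ws" using v valid_Cons by auto
  show ?thesis
  proof (cases "Conv (b1 P) = b1 P")
    case False
    hence "\<not> boolean_ncp P" using b1(1)[OF vv(1,2)] unfolding boolean_ncp_def by blast
    thus ?thesis using False unfolding bw_def by auto
  next
    case True
    show ?thesis
    proof (cases "P - {b1 P} = {}")
      case True2: True
      hence "P = {b1 P}" using b1(1)[OF vv(1,2)] by blast
      hence "\<forall>\<pi>\<in>P. Conv \<pi> = \<pi>" using True by (metis singletonD)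
      hence "boolean_ncp P" unfolding boolean_ncp_def by simp
      thus ?thesis using True True2 unfolding bw_def lower_def by simp
    next
      case False
      hence "lower P (P - {b1 P}) = [std (P - {b1 P})]" unfolding lower_def by simp
      thus ?thesis using True boolean_std_rest[OF vv(1,2) True] unfolding bw_def by simp
    qed
  qed
qed

lemma succ_exists: "succ_eq bw"
  unfolding succ_eq_def
proof (intro allI impI)
  fix w :: "nat set set list" assume v: "valid_word w"
  show "bw w = eps w + dsucc bw echar w"
  proof (cases w)
    case Nil thus ?thesis unfolding eps_def dsucc_def bw_def by simp
  next
    case (Cons P ws) thus ?thesis using dsucc_Cons[of P ws bw] bw_step[of P ws] v unfolding eps_def by simp
  qed
qed

lemma valid_lower_rest:
  assumes P: "ncp P" "P \<noteq> {}"
  shows "valid_word (lower P (P - {b1 P}))" "nb (lower P (P - {b1 P})) = card P - 1"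
proof -
  have fd: "fdisj P" by (rule ncp_fdisj[OF P(1)])
  have fQ: "fdisj (P - {b1 P})" using fdisj_subset[OF fd] by blast
  have nQ: "noncrossing (P - {b1 P})" using noncrossing_subset[OF ncp_nonc[OF P(1)]] by blast
  have cQ: "card (P - {b1 P}) = card P - 1" using b1(1)[OF P] fd unfolding fdisj_def by simp
  show "valid_word (lower P (P - {b1 P}))"
    unfolding lower_def valid_word_def using ncp_std[OF fQ nQ] fdisj_std[OF fQ]
    by (auto simp: std_def)
  show "nb (lower P (P - {b1 P})) = card P - 1"
  proof (cases "P - {b1 P} = {}")
    case True
    hence "card P - 1 = 0" using cQ by (metis card.empty)
    thus ?thesis using True unfolding lower_def by simp
  next
    case False
    thus ?thesis unfolding lower_def using card_std[OF fQ] cQ by simp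
  qed
qed

lemma succ_unique:
  assumes se: "succ_eq \<psi>"
  shows "valid_word w \<Longrightarrow> \<psi> w = bw w"
proof (induction "nb w" arbitrary: w rule: less_induct)
  case less
  show ?case
  proof (cases w)
    case Nil
    thus ?thesis using se less.prems unfolding succ_eq_def eps_def dsucc_def bw_def by simp
  next
    case (Cons P ws)
    have vv: "ncp P" "P \<noteq> {}" "valid_word ws" using less.prems Cons valid_Cons by auto
    have e: "\<psi> w = (if Conv (b1 P) = b1 P then \<psi> (lower P (P - {b1 P}) @ ws) else 0)"
      using se less.prems dsucc_Cons[of P ws \<psi>] Cons unfolding succ_eq_def eps_def by simp
    have "\<psi> (lower P (P - {b1 P}) @ ws) = bw (lower P (P - {b1 P}) @ ws)"
    proof (rule less.hyps)
      show "valid_word (lower P (P - {b1 P}) @ ws)" using valid_lower_rest[OF vv(1,2)] vv(3) valid_append by blast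
      show "nb (lower P (P - {b1 P}) @ ws) < nb w" using valid_lower_rest[OF vv(1,2)] Cons card_pos[OF vv(1,2)] by simp
    qed
    thus ?thesis using e bw_step[of P ws] less.prems Cons by (cases "Conv (b1 P) = b1 P") auto
  qed
qed


lemma conv_cong:
  "valid_word w \<Longrightarrow> (\<And>v. valid_word v \<Longrightarrow> g v = g' v) \<Longrightarrow> conv echar g w = conv echar g' w"
proof (induction w arbitrary: g g')
  case Nil thus ?case by (simp add: conv_Nil)
next
  case (Cons P ws)
  have vv: "ncp P" "P \<noteq> {}" "valid_word ws" using Cons.prems(1) valid_Cons by auto
  have a: "(\<Sum>\<pi>\<in>{\<pi>\<in>P. isouter P \<pi>}. g (upper P {\<pi>} @ ws)) = (\<Sum>\<pi>\<in>{\<pi>\<in>P. isouter P \<pi>}. g' (upper P {\<pi>} @ ws))"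
  proof (rule sum.cong[OF refl])
    fix \<pi> assume p: "\<pi> \<in> {\<pi>\<in>P. isouter P \<pi>}"
    hence "{\<pi>} \<in> lowersets P" using single_lowerset by blast
    hence "valid_word (upper P {\<pi>} @ ws)" using valid_upper[OF vv(1)] vv(3) valid_append by blast
    thus "g (upper P {\<pi>} @ ws) = g' (upper P {\<pi>} @ ws)" by (rule Cons.prems(2))
  qed
  have b: "conv echar (\<lambda>v. g (P # v)) ws = conv echar (\<lambda>v. g' (P # v)) ws"
  proof (rule Cons.IH[OF vv(3)])
    fix v assume "valid_word v"
    hence "valid_word (P # v)" using vv valid_Cons by blast
    thus "g (P # v) = g' (P # v)" by (rule Cons.prems(2))
  qed
  show ?case using conv_Cons[OF Cons.prems(1)] a b by simp
qed

definition FF :: "nat \<Rightarrow> nat set set list \<Rightarrow> real" where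
  "FF m w = (if m = nb w then fact m * prod_list (map rr w) else 0)"

lemma sum_rr: assumes "ncp P" "P \<noteq> {}"
  shows "(\<Sum>\<pi>\<in>{\<pi>\<in>P. isouter P \<pi>}. rr (P - {\<pi>})) = real (card P) * rr P"
  using rr_rec[of P] assms ncp_fdisj unfolding fdisj_def by auto

lemma star_step:
  "valid_word (pre @ ws) \<Longrightarrow> conv echar (\<lambda>v. FF m (pre @ v)) ws =
     (if Suc m = nb (pre @ ws) then fact m * real (nb ws) * prod_list (map rr (pre @ ws)) else 0)"
proof (induction ws arbitrary: pre)
  case Nil thus ?case by (simp add: conv_Nil)
next
  case (Cons P ws)
  have va: "valid_word pre" "valid_word (P # ws)" using Cons.prems valid_append by auto
  have vv: "ncp P" "P \<noteq> {}" "valid_word ws" using va(2) valid_Cons by auto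
  have cp: "card P \<ge> 1" by (rule card_pos[OF vv(1,2)])
  let ?O = "{\<pi>\<in>P. isouter P \<pi>}"
  let ?N = "nb (pre @ P # ws)"
  let ?A = "prod_list (map rr pre)" and ?B = "prod_list (map rr ws)"
  have t1: "FF m (pre @ upper P {\<pi>} @ ws) = (if Suc m = ?N then fact m * (?A * rr (P - {\<pi>}) * ?B) else 0)"
    if p: "\<pi> \<in> ?O" for \<pi>
  proof -
    have L: "{\<pi>} \<in> lowersets P" using p single_lowerset by blast
    have pP: "\<pi> \<in> P" using p by blast
    have n: "nb (upper P {\<pi>}) = card P - 1" using nb_upper[OF vv(1) L] pP by simp
    have r: "prod_list (map rr (upper P {\<pi>})) = rr (P - {\<pi>})" by (rule rr_upper[OF ncp_fdisj[OF vv(1)] L])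
    have "nb (pre @ upper P {\<pi>} @ ws) = nb pre + (card P - 1) + nb ws" using n by simp
    hence "(m = nb (pre @ upper P {\<pi>} @ ws)) = (Suc m = ?N)" using cp by auto
    thus ?thesis unfolding FF_def using r by (simp add: mult.assoc)
  qed
  have "conv echar (\<lambda>v. FF m (pre @ v)) (P # ws) =
        (\<Sum>\<pi>\<in>?O. FF m (pre @ upper P {\<pi>} @ ws)) + conv echar (\<lambda>v. FF m ((pre @ [P]) @ v)) ws"
    using conv_Cons[OF va(2), of "\<lambda>v. FF m (pre @ v)"] by simp
  also have "(\<Sum>\<pi>\<in>?O. FF m (pre @ upper P {\<pi>} @ ws)) =
             (\<Sum>\<pi>\<in>?O. if Suc m = ?N then fact m * (?A * rr (P - {\<pi>}) * ?B) else 0)"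
    using t1 by (rule sum.cong[OF refl])
  also have "\<dots> = (if Suc m = ?N then fact m * real (card P) * prod_list (map rr (pre @ P # ws)) else 0)"
  proof (cases "Suc m = ?N")
    case True
    have "(\<Sum>\<pi>\<in>?O. fact m * (?A * rr (P - {\<pi>}) * ?B)) = fact m * ?A * ?B * (\<Sum>\<pi>\<in>?O. rr (P - {\<pi>}))"
      by (simp add: sum_distrib_left mult_ac)
    also have "\<dots> = fact m * real (card P) * prod_list (map rr (pre @ P # ws))"
      using sum_rr[OF vv(1,2)] by (simp add: mult_ac)
    finally show ?thesis using True by simp
  qed simp
  also have "conv echar (\<lambda>v. FF m ((pre @ [P]) @ v)) ws =
      (if Suc m = nb ((pre @ [P]) @ ws) then fact m * real (nb ws) * prod_list (map rr ((pre @ [P]) @ ws)) else 0)"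
    using Cons.IH[of "pre @ [P]"] Cons.prems by simp
  finally show ?case by (simp add: algebra_simps)
qed

lemma nb_zero: "valid_word w \<Longrightarrow> nb w = 0 \<longleftrightarrow> w = []"
proof (cases w)
  case (Cons P ws)
  assume v: "valid_word w"
  hence "card P \<ge> 1" using Cons valid_Cons card_pos by blast
  thus ?thesis using Cons by simp
qed simp

lemma conv_pow_FF: "valid_word w \<Longrightarrow> conv_pow echar m w = FF m w"
proof (induction m arbitrary: w)
  case 0
  thus ?case unfolding FF_def using nb_zero[OF 0] by (auto simp: eps_def)
next
  case (Suc m)
  have "conv_pow echar (Suc m) w = conv echar (conv_pow echar m) w" by simp
  also have "\<dots> = conv echar (FF m) w" by (rule conv_cong[OF Suc.prems Suc.IH])
  also have "\<dots> = conv echar (\<lambda>v. FF m ([] @ v)) w" by simp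
  also have "\<dots> = (if Suc m = nb w then fact m * real (nb w) * prod_list (map rr w) else 0)"
    using star_step[of "[]" w m] Suc.prems by simp
  also have "\<dots> = FF (Suc m) w"
  proof (cases "Suc m = nb w")
    case True
    thus ?thesis unfolding FF_def by (simp add: True[symmetric] algebra_simps)
  qed (simp add: FF_def)
  finally show ?case .
qed

lemma psi_star_P: assumes "ncp P" "P \<noteq> {}" shows "psi_star [P] = rr P"
proof -
  have v: "valid_word [P]" using assms unfolding valid_word_def by simp
  have "(\<lambda>m. conv_pow echar m [P] / fact m) = (\<lambda>m. if m = card P then rr P else 0)"
  proof
    fix m show "conv_pow echar m [P] / fact m = (if m = card P then rr P else 0)"
      unfolding conv_pow_FF[OF v] FF_def by simp
  qed
  moreover have "(\<lambda>m. if m = card P then rr P else 0) sums rr P"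
    using sums_single[of "card P" "\<lambda>_. rr P"] by simp
  ultimately show ?thesis unfolding psi_star_def by (simp add: sums_iff)
qed

theorem mainTheorem16:
  fixes P :: "nat set set"
  assumes "ncp P" and "P \<noteq> {}"
  shows "((\<exists>\<psi>. prec_eq \<psi>) \<and> (\<forall>\<psi>. prec_eq \<psi> \<longrightarrow> \<psi> [P] = 1)) \<and>
         ((\<exists>\<psi>. succ_eq \<psi>) \<and>
         (\<forall>\<psi>. succ_eq \<psi> \<longrightarrow> \<psi> [P] = (if boolean_ncp P then 1 else 0))) \<and>
         psi_star [P] = real (ho P) / fact (card P)"
proof -
  have v: "valid_word [P]" using assms unfolding valid_word_def by simp
  have 1: "\<forall>\<psi>. prec_eq \<psi> \<longrightarrow> \<psi> [P] = 1" using prec_unique v by blast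
  have 2: "\<forall>\<psi>. succ_eq \<psi> \<longrightarrow> \<psi> [P] = (if boolean_ncp P then 1 else 0)"
  proof (intro allI impI)
    fix \<psi> assume "succ_eq \<psi>"
    hence "\<psi> [P] = bw [P]" using succ_unique v by blast
    thus "\<psi> [P] = (if boolean_ncp P then 1 else 0)" unfolding bw_def by simp
  qed
  have 3: "psi_star [P] = real (ho P) / fact (card P)" using psi_star_P[OF assms] unfolding rr_def .
  show ?thesis using 1 2 3 prec_exists succ_exists by blast
qed


end
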